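(* Let $K$ be a field, $S=K[x_1,\ldots,x_n]$, and $\alpha=(k_1,\ldots,k_n)\in\mathbb N^n$. A monomial ideal $I\subset S$ has linear quotients if and only if its expansion $I^\alpha\subset S^\alpha$ has linear quotients.
   Context: $\mathbb N$ denotes the positive integers. For $\alpha=(k_1,\ldots,k_n)\in\mathbb N^n$ let $S^\alpha=K[x_{ij}:1\le i\le n,\ 1\le j\le k_i]$ and $P_i=(x_{i1},\ldots,x_{ik_i})\subset S^\alpha$. If $I$ is a monomial ideal with minimal monomial generating set $G(I)=\{\mathbf x^{\mathbf a_1},\ldots,\mathbf x^{\mathbf a_r}\}$, its expansion is $I^\alpha=\sum_{l=1}^r P_1^{\mathbf a_l(1)}\cdots P_n^{\mathbf a_l(n)}\subset S^\alpha$. A monomial ideal $I$ has linear quotients with respect to an ordering $u_1,\ldots,u_r$ of its minimal monomial generators if for all $j=2,\ldots,r$ the colon ideal $(u_1,\ldots,u_{j-1}):(u_j)$ is generated by variables; $I$ has linear quotients if it has linear quotients with respect to some ordering of $G(I)$. *)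

theory Defs
  imports "HOL-Library.Poly_Mapping"
begin

(* Polynomials in variables of type 'v with coefficients in 'k:
   finitely supported maps from exponent vectors ('v \<Rightarrow>\<^sub>0 nat) to 'k,
   with the convolution product of HOL-Library.Poly_Mapping. *)
type_synonym ('v, 'k) mpoly = "('v \<Rightarrow>\<^sub>0 nat) \<Rightarrow>\<^sub>0 'k"

definition polyring :: "'v set \<Rightarrow> ('v, 'k::comm_ring_1) mpoly set" where
  "polyring V = {p. \<forall>m\<in>Poly_Mapping.keys p. Poly_Mapping.keys m \<subseteq> V}"

definition mon :: "('v \<Rightarrow>\<^sub>0 nat) \<Rightarrow> ('v, 'k::comm_ring_1) mpoly" where
  "mon m = Poly_Mapping.single m 1"

definition var :: "'v \<Rightarrow> ('v, 'k::comm_ring_1) mpoly" where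
  "var v = mon (Poly_Mapping.single v 1)"

definition ideal_gen :: "'v set \<Rightarrow> ('v, 'k::comm_ring_1) mpoly set \<Rightarrow> ('v, 'k) mpoly set" where
  "ideal_gen V G = {p. \<exists>F c. finite F \<and> F \<subseteq> G \<and> (\<forall>g\<in>F. c g \<in> polyring V)
                          \<and> p = (\<Sum>g\<in>F. c g * g)}"

definition is_ideal :: "'v set \<Rightarrow> ('v, 'k::comm_ring_1) mpoly set \<Rightarrow> bool" where
  "is_ideal V I \<longleftrightarrow> I \<subseteq> polyring V \<and> ideal_gen V I = I"

definition monomial_ideal :: "'v set \<Rightarrow> ('v, 'k::comm_ring_1) mpoly set \<Rightarrow> bool" where
  "monomial_ideal V I \<longleftrightarrow> is_ideal V I \<and> I = ideal_gen V {mon m | m. mon m \<in> I}"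

definition colon :: "'v set \<Rightarrow> ('v, 'k::comm_ring_1) mpoly set \<Rightarrow> ('v, 'k) mpoly \<Rightarrow> ('v, 'k) mpoly set" where
  "colon V J f = {g \<in> polyring V. g * f \<in> J}"

definition mdvd :: "('v \<Rightarrow>\<^sub>0 nat) \<Rightarrow> ('v \<Rightarrow>\<^sub>0 nat) \<Rightarrow> bool" where
  "mdvd a b \<longleftrightarrow> (\<forall>v. Poly_Mapping.lookup a v \<le> Poly_Mapping.lookup b v)"

definition min_gens :: "'v set \<Rightarrow> ('v, 'k::comm_ring_1) mpoly set \<Rightarrow> ('v \<Rightarrow>\<^sub>0 nat) set" where
  "min_gens V I = {m. mon m \<in> I \<and> (\<forall>m'. mon m' \<in> I \<and> mdvd m' m \<longrightarrow> m' = m)}"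

definition lin_quot_wrt :: "'v set \<Rightarrow> ('v \<Rightarrow>\<^sub>0 nat) list \<Rightarrow> 'k::comm_ring_1 itself \<Rightarrow> bool" where
  "lin_quot_wrt V us (_ :: 'k itself) \<longleftrightarrow>
     (\<forall>j. 1 \<le> j \<and> j < length us \<longrightarrow>
        (\<exists>W \<subseteq> V. colon V (ideal_gen V ((mon :: _ \<Rightarrow> ('v,'k) mpoly) ` set (take j us))) (mon (us ! j))
                   = ideal_gen V (var ` W)))"

definition has_lin_quot :: "'v set \<Rightarrow> ('v, 'k::comm_ring_1) mpoly set \<Rightarrow> bool" where
  "has_lin_quot V I \<longleftrightarrow>
     (\<exists>us. distinct us \<and> set us = min_gens V I \<and> lin_quot_wrt V us TYPE('k))"

definition ideal_mult :: "'v set \<Rightarrow> ('v, 'k::comm_ring_1) mpoly set \<Rightarrow> ('v, 'k) mpoly set \<Rightarrow> ('v, 'k) mpoly set" where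
  "ideal_mult V A B = ideal_gen V {a * b | a b. a \<in> A \<and> b \<in> B}"

fun ideal_pow :: "'v set \<Rightarrow> ('v, 'k::comm_ring_1) mpoly set \<Rightarrow> nat \<Rightarrow> ('v, 'k) mpoly set" where
  "ideal_pow V A 0 = ideal_gen V {1}"
| "ideal_pow V A (Suc d) = ideal_mult V A (ideal_pow V A d)"

(* Variables of S^alpha: x_{ij} indexed by (i,j) with i < n, j < k i (0-based indices) *)
definition expvars :: "nat \<Rightarrow> (nat \<Rightarrow> nat) \<Rightarrow> (nat \<times> nat) set" where
  "expvars n k = {(i, j). i < n \<and> j < k i}"

definition Pideal :: "nat \<Rightarrow> (nat \<Rightarrow> nat) \<Rightarrow> nat \<Rightarrow> (nat \<times> nat, 'k::comm_ring_1) mpoly set" where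
  "Pideal n k i = ideal_gen (expvars n k) {var (i, j) | j. j < k i}"

(* expansion I^alpha = sum over a in G(I) of P_1^{a(1)} ... P_n^{a(n)},
   for I a monomial ideal of S = K[x_0,...,x_{n-1}] *)
definition expansion :: "nat \<Rightarrow> (nat \<Rightarrow> nat) \<Rightarrow> (nat, 'k::comm_ring_1) mpoly set
                          \<Rightarrow> (nat \<times> nat, 'k) mpoly set" where
  "expansion n k I =
     ideal_gen (expvars n k)
       (\<Union>a \<in> min_gens {..<n} I.
          foldr (\<lambda>i J. ideal_mult (expvars n k) (ideal_pow (expvars n k) (Pideal n k i) (Poly_Mapping.lookup a i)) J)
                [0..<n] (ideal_gen (expvars n k) {1}))"

end

theory Submission
  imports Defs "HOL-Library.Product_Lexorder"
begin

lemma lookup_minus_nat: "Poly_Mapping.lookup (f - g) x = Poly_Mapping.lookup f x - (Poly_Mapping.lookup g x :: nat)"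
  by transfer simp

lemma pm_eq_iff: "(a::'a \<Rightarrow>\<^sub>0 'b::zero) = b \<longleftrightarrow> (\<forall>x. Poly_Mapping.lookup a x = Poly_Mapping.lookup b x)"
  by (metis poly_mapping_eqI)

lemma keys_add_nat: "Poly_Mapping.keys (a + (b :: 'a \<Rightarrow>\<^sub>0 nat)) = Poly_Mapping.keys a \<union> Poly_Mapping.keys b"
  by (auto simp: in_keys_iff lookup_add)

lemma keys_minus_nat: "Poly_Mapping.keys (a - (b :: 'a \<Rightarrow>\<^sub>0 nat)) \<subseteq> Poly_Mapping.keys a"
  by (auto simp: in_keys_iff lookup_minus_nat)

lemma keys_le_minus: "Poly_Mapping.keys (a :: 'a \<Rightarrow>\<^sub>0 nat) \<subseteq> Poly_Mapping.keys (a - u) \<union> Poly_Mapping.keys u"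
  by (auto simp: in_keys_iff lookup_minus_nat)

lemma mdvd_refl[simp]: "mdvd a a" by (simp add: mdvd_def)

lemma mdvd_trans: "mdvd a b \<Longrightarrow> mdvd b c \<Longrightarrow> mdvd a c"
  unfolding mdvd_def using le_trans by blast

lemma mdvd_antisym: "mdvd a b \<Longrightarrow> mdvd b a \<Longrightarrow> a = b"
  unfolding mdvd_def pm_eq_iff using antisym by blast

lemma mdvd_add: "mdvd a b \<Longrightarrow> mdvd c d \<Longrightarrow> mdvd (a + c) (b + d)"
  unfolding mdvd_def by (simp add: lookup_add add_mono)

lemma mdvd_add_right: "mdvd a (a + b)"
  unfolding mdvd_def by (simp add: lookup_add)

lemma mdvd_keys: "mdvd a b \<Longrightarrow> Poly_Mapping.keys a \<subseteq> Poly_Mapping.keys b"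
proof
  fix x assume "mdvd a b" "x \<in> Poly_Mapping.keys a"
  then have "Poly_Mapping.lookup a x \<le> Poly_Mapping.lookup b x" "Poly_Mapping.lookup a x \<noteq> 0"
    by (auto simp: mdvd_def in_keys_iff)
  then show "x \<in> Poly_Mapping.keys b" by (simp add: in_keys_iff)
qed

lemma mdvd_minus_add: "mdvd a m \<Longrightarrow> m - a + a = m"
  unfolding mdvd_def pm_eq_iff by (simp add: lookup_add lookup_minus_nat)

lemma mdvd_single: "mdvd (Poly_Mapping.single w 1) c \<longleftrightarrow> 1 \<le> Poly_Mapping.lookup c w"
  unfolding mdvd_def by (auto simp: lookup_single when_def)

lemma mdvd_into_single:
  assumes "mdvd c (Poly_Mapping.single w 1)" "c \<noteq> 0"
  shows "c = Poly_Mapping.single w 1"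
proof -
  have le: "Poly_Mapping.lookup c x \<le> (if x = w then 1 else 0)" for x
    using assms(1) unfolding mdvd_def by (auto simp: lookup_single when_def split: if_splits)
  have z: "Poly_Mapping.lookup c x = 0" if "x \<noteq> w" for x using le[of x] that by simp
  have "Poly_Mapping.lookup c w \<noteq> 0"
  proof
    assume "Poly_Mapping.lookup c w = 0"
    then have "c = 0" using z unfolding pm_eq_iff by (metis lookup_zero)
    then show False using assms(2) by simp
  qed
  then have "Poly_Mapping.lookup c w = 1" using le[of w] by simp
  then show ?thesis using z unfolding pm_eq_iff by (simp add: lookup_single when_def)
qed

lemma minus_eq_zero_iff_mdvd: "(a - u :: 'a \<Rightarrow>\<^sub>0 nat) = 0 \<longleftrightarrow> mdvd a u"
  unfolding mdvd_def pm_eq_iff by (simp add: lookup_minus_nat)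

lemma polyring_0[simp]: "0 \<in> polyring V" by (simp add: polyring_def)

lemma polyring_1[simp]: "(1::('v,'k::comm_ring_1) mpoly) \<in> polyring V"
  by (simp add: polyring_def)

lemma polyring_add:
  assumes "p \<in> polyring V" "q \<in> polyring V" shows "p + q \<in> polyring V"
proof -
  have "Poly_Mapping.keys m \<subseteq> V" if mk: "m \<in> Poly_Mapping.keys (p + q)" for m
  proof -
    have "m \<in> Poly_Mapping.keys p \<union> Poly_Mapping.keys q" using keys_add[of p q] mk by blast
    then show ?thesis using assms unfolding polyring_def by blast
  qed
  then show ?thesis by (simp add: polyring_def)
qed

lemma polyring_mult:
  assumes "p \<in> polyring V" "q \<in> polyring V" shows "p * q \<in> polyring V"
proof -
  have "Poly_Mapping.keys m \<subseteq> V" if mk: "m \<in> Poly_Mapping.keys (p * q)" for m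
  proof -
    obtain a b where "m = a + b" "a \<in> Poly_Mapping.keys p" "b \<in> Poly_Mapping.keys q"
      using keys_mult[of p q] mk by blast
    then show ?thesis using assms unfolding polyring_def by (auto simp: keys_add_nat)
  qed
  then show ?thesis by (simp add: polyring_def)
qed

lemma keys_mon: "Poly_Mapping.keys (mon m :: ('v,'k::field) mpoly) = {m}"
  by (simp add: mon_def)

lemma keys_mon_sub: "Poly_Mapping.keys (mon m :: ('v,'k::comm_ring_1) mpoly) \<subseteq> {m}"
  by (simp add: mon_def)

lemma mon_polyring: "Poly_Mapping.keys m \<subseteq> V \<Longrightarrow> mon m \<in> polyring V"
  unfolding polyring_def using keys_mon_sub by blast

lemma mon_mult: "mon a * mon b = mon (a + b)"
  by (simp add: mon_def mult_single add.commute)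

lemma mon_0: "mon 0 = 1" by (simp add: mon_def)

lemma single_polyring: "Poly_Mapping.keys m \<subseteq> V \<Longrightarrow> Poly_Mapping.single m c \<in> polyring V"
  unfolding polyring_def by auto

lemma polyring_keys: "p \<in> polyring V \<Longrightarrow> m \<in> Poly_Mapping.keys p \<Longrightarrow> Poly_Mapping.keys m \<subseteq> V"
  unfolding polyring_def by blast

definition ideal_like :: "'v set \<Rightarrow> ('v, 'k::comm_ring_1) mpoly set \<Rightarrow> bool" where
  "ideal_like V J \<longleftrightarrow> J \<subseteq> polyring V \<and> 0 \<in> J \<and> (\<forall>p q. p \<in> J \<longrightarrow> q \<in> J \<longrightarrow> p + q \<in> J)
     \<and> (\<forall>c p. c \<in> polyring V \<longrightarrow> p \<in> J \<longrightarrow> c * p \<in> J)"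

lemma ideal_like_sum:
  assumes "ideal_like V J" "finite F" "\<And>x. x \<in> F \<Longrightarrow> f x \<in> J"
  shows "sum f F \<in> J"
  using assms(2,3)
proof (induction F rule: finite_induct)
  case empty then show ?case using assms(1) by (simp add: ideal_like_def)
next
  case (insert x F) then show ?case using assms(1) by (simp add: ideal_like_def)
qed

lemma ig_intro:
  assumes "finite F" "F \<subseteq> G" "\<And>g. g \<in> F \<Longrightarrow> c g \<in> polyring V" "p = (\<Sum>g\<in>F. c g * g)"
  shows "p \<in> ideal_gen V G"
  unfolding ideal_gen_def using assms by blast

lemma ig_least:
  assumes "G \<subseteq> J" "ideal_like V J"
  shows "ideal_gen V G \<subseteq> J"
proof
  fix p assume "p \<in> ideal_gen V G"
  then obtain F c where F: "finite F" "F \<subseteq> G" "\<forall>g\<in>F. c g \<in> polyring V" "p = (\<Sum>g\<in>F. c g * g)"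
    unfolding ideal_gen_def by blast
  have m: "\<forall>c p. c \<in> polyring V \<longrightarrow> p \<in> J \<longrightarrow> c * p \<in> J" using assms(2) by (simp add: ideal_like_def)
  have "c g * g \<in> J" if "g \<in> F" for g using m F(2,3) assms(1) that by blast
  then show "p \<in> J" unfolding F(4) by (rule ideal_like_sum[OF assms(2) F(1)])
qed

lemma ig_mono: "G \<subseteq> H \<Longrightarrow> ideal_gen V G \<subseteq> ideal_gen V H"
  unfolding ideal_gen_def by blast

lemma ig_gen: "g \<in> G \<Longrightarrow> g \<in> ideal_gen V G"
  unfolding ideal_gen_def
  by (rule CollectI, rule exI[of _ "{g}"], rule exI[of _ "\<lambda>_. 1"]) auto

lemma ig_polyring: "G \<subseteq> polyring V \<Longrightarrow> ideal_gen V G \<subseteq> polyring V"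
proof
  fix p assume "G \<subseteq> polyring V" "p \<in> ideal_gen V G"
  then obtain F c where F: "finite F" "F \<subseteq> G" "\<forall>g\<in>F. c g \<in> polyring V" "p = (\<Sum>g\<in>F. c g * g)"
    unfolding ideal_gen_def by blast
  have "\<And>F'. F' \<subseteq> F \<Longrightarrow> (\<Sum>g\<in>F'. c g * g) \<in> polyring V"
  proof -
    fix F' assume "F' \<subseteq> F"
    then have "finite F'" using F(1) finite_subset by blast
    then show "(\<Sum>g\<in>F'. c g * g) \<in> polyring V" using \<open>F' \<subseteq> F\<close>
    proof (induction F' rule: finite_induct)
      case empty then show ?case by simp
    next
      case (insert x F')
      then have "x \<in> F" "F' \<subseteq> F" by auto
      then have "c x \<in> polyring V" "x \<in> polyring V" using F(2,3) \<open>G \<subseteq> polyring V\<close> by auto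
      then have "c x * x \<in> polyring V" by (rule polyring_mult)
      moreover have "(\<Sum>g\<in>F'. c g * g) \<in> polyring V" using insert.IH \<open>F' \<subseteq> F\<close> by blast
      ultimately show ?case using insert.hyps by (simp add: polyring_add)
    qed
  qed
  then show "p \<in> polyring V" using F(4) by blast
qed

lemma ig_add:
  assumes "p \<in> ideal_gen V G" "q \<in> ideal_gen V G"
  shows "p + q \<in> ideal_gen V G"
proof -
  obtain F1 c1 where F1: "finite F1" "F1 \<subseteq> G" "\<forall>g\<in>F1. c1 g \<in> polyring V" "p = (\<Sum>g\<in>F1. c1 g * g)"
    using assms(1) unfolding ideal_gen_def by blast
  obtain F2 c2 where F2: "finite F2" "F2 \<subseteq> G" "\<forall>g\<in>F2. c2 g \<in> polyring V" "q = (\<Sum>g\<in>F2. c2 g * g)"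
    using assms(2) unfolding ideal_gen_def by blast
  define d1 where "d1 g = (if g \<in> F1 then c1 g else 0)" for g
  define d2 where "d2 g = (if g \<in> F2 then c2 g else 0)" for g
  have e1: "(\<Sum>g\<in>F1 \<union> F2. d1 g * g) = p"
    unfolding F1(4) d1_def
    by (rule sum.mono_neutral_cong_right) (use F1 F2 in auto)
  have e2: "(\<Sum>g\<in>F1 \<union> F2. d2 g * g) = q"
    unfolding F2(4) d2_def
    by (rule sum.mono_neutral_cong_right) (use F1 F2 in auto)
  have "(\<Sum>g\<in>F1 \<union> F2. (d1 g + d2 g) * g) = (\<Sum>g\<in>F1 \<union> F2. d1 g * g) + (\<Sum>g\<in>F1 \<union> F2. d2 g * g)"
    by (simp only: distrib_right sum.distrib)
  then have eq: "p + q = (\<Sum>g\<in>F1 \<union> F2. (d1 g + d2 g) * g)"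
    unfolding e1 e2 by (rule sym)
  have pr: "d1 g + d2 g \<in> polyring V" if "g \<in> F1 \<union> F2" for g
    using F1(3) F2(3) by (simp add: d1_def d2_def polyring_add)
  show ?thesis
    by (rule ig_intro[of "F1 \<union> F2" G "\<lambda>g. d1 g + d2 g", OF _ _ pr eq]) (use F1(1,2) F2(1,2) in auto)
qed

lemma ig_mult:
  assumes "c \<in> polyring V" "p \<in> ideal_gen V G"
  shows "c * p \<in> ideal_gen V G"
proof -
  obtain F c1 where F1: "finite F" "F \<subseteq> G" "\<forall>g\<in>F. c1 g \<in> polyring V" "p = (\<Sum>g\<in>F. c1 g * g)"
    using assms(2) unfolding ideal_gen_def by blast
  have eq: "c * p = (\<Sum>g\<in>F. (c * c1 g) * g)" unfolding F1(4) by (simp add: sum_distrib_left mult.assoc)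
  have pr: "c * c1 g \<in> polyring V" if "g \<in> F" for g using F1(3) assms(1) that by (simp add: polyring_mult)
  show ?thesis by (rule ig_intro[of F G "\<lambda>g. c * c1 g", OF F1(1,2) pr eq])
qed

lemma ig_0: "0 \<in> ideal_gen V G"
  unfolding ideal_gen_def by (rule CollectI, rule exI[of _ "{}"]) auto

lemma ideal_like_ig: "G \<subseteq> polyring V \<Longrightarrow> ideal_like V (ideal_gen V G)"
  unfolding ideal_like_def by (intro conjI allI impI ig_polyring ig_0 ig_add ig_mult)

definition MI :: "'v set \<Rightarrow> ('v \<Rightarrow>\<^sub>0 nat) set \<Rightarrow> ('v, 'k::comm_ring_1) mpoly set" where
  "MI V A = ideal_gen V (mon ` A)"

definition MIset :: "'v set \<Rightarrow> ('v \<Rightarrow>\<^sub>0 nat) set \<Rightarrow> ('v, 'k::comm_ring_1) mpoly set" where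
  "MIset V A = {p \<in> polyring V. \<forall>m\<in>Poly_Mapping.keys p. \<exists>a\<in>A. mdvd a m}"

definition keyed :: "'v set \<Rightarrow> ('v \<Rightarrow>\<^sub>0 nat) set \<Rightarrow> bool" where
  "keyed V A \<longleftrightarrow> (\<forall>a\<in>A. Poly_Mapping.keys a \<subseteq> V)"

lemma ideal_like_MIset: "ideal_like V (MIset V A :: ('v,'k::comm_ring_1) mpoly set)"
  unfolding ideal_like_def
proof (intro conjI allI impI)
  show "(MIset V A :: ('v,'k) mpoly set) \<subseteq> polyring V" by (auto simp: MIset_def)
  show "0 \<in> (MIset V A :: ('v,'k) mpoly set)" by (simp add: MIset_def)
  fix p q :: "('v,'k) mpoly" assume pq: "p \<in> MIset V A" "q \<in> MIset V A"
  have "\<forall>m\<in>Poly_Mapping.keys (p + q). \<exists>a\<in>A. mdvd a m"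
  proof
    fix m assume "m \<in> Poly_Mapping.keys (p + q)"
    then have "m \<in> Poly_Mapping.keys p \<union> Poly_Mapping.keys q" using keys_add[of p q] by blast
    then show "\<exists>a\<in>A. mdvd a m" using pq unfolding MIset_def by blast
  qed
  moreover have "p + q \<in> polyring V" using pq unfolding MIset_def by (simp add: polyring_add)
  ultimately show "p + q \<in> MIset V A" unfolding MIset_def by blast
next
  fix c p :: "('v,'k) mpoly" assume a: "c \<in> polyring V" "p \<in> MIset V A"
  have "\<forall>m\<in>Poly_Mapping.keys (c * p). \<exists>a\<in>A. mdvd a m"
  proof
    fix m assume "m \<in> Poly_Mapping.keys (c * p)"
    then obtain x y where xy: "m = x + y" "x \<in> Poly_Mapping.keys c" "y \<in> Poly_Mapping.keys p"
      using keys_mult[of c p] by blast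
    then obtain a where "a \<in> A" "mdvd a y" using a unfolding MIset_def by blast
    moreover have "mdvd y m" using mdvd_add_right[of y x] xy(1) by (simp add: add.commute)
    ultimately show "\<exists>a\<in>A. mdvd a m" using mdvd_trans by blast
  qed
  moreover have "c * p \<in> polyring V" using a unfolding MIset_def by (simp add: polyring_mult)
  ultimately show "c * p \<in> MIset V A" unfolding MIset_def by blast
qed

lemma pm_expand: "p = (\<Sum>m\<in>Poly_Mapping.keys p. Poly_Mapping.single m (Poly_Mapping.lookup p m))"
proof (rule poly_mapping_eqI)
  fix x
  have "Poly_Mapping.lookup (\<Sum>m\<in>Poly_Mapping.keys p. Poly_Mapping.single m (Poly_Mapping.lookup p m)) x
     = (\<Sum>m\<in>Poly_Mapping.keys p. if m = x then Poly_Mapping.lookup p m else 0)"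
    by (simp add: lookup_sum lookup_single when_def)
  also have "\<dots> = Poly_Mapping.lookup p x"
    by (simp add: sum.delta in_keys_iff)
  finally show "Poly_Mapping.lookup p x = Poly_Mapping.lookup (\<Sum>m\<in>Poly_Mapping.keys p. Poly_Mapping.single m (Poly_Mapping.lookup p m)) x" ..
qed

lemma MI_eq_MIset:
  assumes "keyed V A"
  shows "MI V A = (MIset V A :: ('v,'k::comm_ring_1) mpoly set)"
proof
  have "mon ` A \<subseteq> (MIset V A :: ('v,'k) mpoly set)"
  proof
    fix p assume "p \<in> (mon ` A :: ('v,'k) mpoly set)"
    then obtain a where a: "a \<in> A" "p = mon a" by blast
    have "\<forall>m\<in>Poly_Mapping.keys p. \<exists>a\<in>A. mdvd a m"
      using a keys_mon_sub[of a] by (metis mdvd_refl singletonD subsetD)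
    moreover have "p \<in> polyring V" using a assms by (auto simp: keyed_def intro!: mon_polyring)
    ultimately show "p \<in> MIset V A" by (simp add: MIset_def)
  qed
  then show "MI V A \<subseteq> (MIset V A :: ('v,'k) mpoly set)"
    unfolding MI_def by (rule ig_least[OF _ ideal_like_MIset])
next
  have il: "ideal_like V (MI V A :: ('v,'k) mpoly set)"
    unfolding MI_def
  proof (rule ideal_like_ig, rule subsetI)
    fix x assume "x \<in> (mon ` A :: ('v,'k) mpoly set)"
    then obtain a where "a \<in> A" "x = mon a" by blast
    then show "x \<in> polyring V" using assms unfolding keyed_def by (simp add: mon_polyring)
  qed
  show "(MIset V A :: ('v,'k) mpoly set) \<subseteq> MI V A"
  proof
    fix p :: "('v,'k) mpoly" assume p: "p \<in> MIset V A"
    have "\<And>m. m \<in> Poly_Mapping.keys p \<Longrightarrow> Poly_Mapping.single m (Poly_Mapping.lookup p m) \<in> MI V A"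
    proof -
      fix m assume m: "m \<in> Poly_Mapping.keys p"
      then obtain a where a: "a \<in> A" "mdvd a m" using p unfolding MIset_def by blast
      have km: "Poly_Mapping.keys m \<subseteq> V" using p m unfolding MIset_def polyring_def by blast
      have e: "Poly_Mapping.single m (Poly_Mapping.lookup p m) = Poly_Mapping.single (m - a) (Poly_Mapping.lookup p m) * mon a"
        by (simp add: mon_def mult_single mdvd_minus_add[OF a(2)])
      have "Poly_Mapping.keys (m - a) \<subseteq> V" using km keys_minus_nat[of m a] by (rule order_trans[rotated])
      then have pr: "Poly_Mapping.single (m - a) (Poly_Mapping.lookup p m) \<in> polyring V"
        by (rule single_polyring)
      have ma: "mon a \<in> MI V A" unfolding MI_def using a(1) by (intro ig_gen imageI)
      show "Poly_Mapping.single m (Poly_Mapping.lookup p m) \<in> MI V A"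
        unfolding e using il pr ma unfolding ideal_like_def by blast
    qed
    then have "(\<Sum>m\<in>Poly_Mapping.keys p. Poly_Mapping.single m (Poly_Mapping.lookup p m)) \<in> MI V A"
      by (rule ideal_like_sum[OF il finite_keys])
    then show "p \<in> MI V A" using pm_expand[of p] by simp
  qed
qed

lemma ideal_like_MI: "keyed V A \<Longrightarrow> ideal_like V (MI V A)"
  by (simp add: MI_eq_MIset ideal_like_MIset)

lemma mon_in_MI:
  assumes "keyed V A" "Poly_Mapping.keys m \<subseteq> V"
  shows "(mon m :: ('v,'k::field) mpoly) \<in> MI V A \<longleftrightarrow> (\<exists>a\<in>A. mdvd a m)"
  using assms by (simp add: MI_eq_MIset MIset_def keys_mon mon_polyring)

lemma MI_eq_iff:
  assumes "keyed V A" "keyed V B"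
  shows "(MI V A :: ('v,'k::field) mpoly set) = MI V B \<longleftrightarrow>
           (\<forall>a\<in>A. \<exists>b\<in>B. mdvd b a) \<and> (\<forall>b\<in>B. \<exists>a\<in>A. mdvd a b)"
proof
  assume e: "(MI V A :: ('v,'k) mpoly set) = MI V B"
  have "\<forall>a\<in>A. \<exists>b\<in>B. mdvd b a"
  proof
    fix a assume a: "a \<in> A"
    have ka: "Poly_Mapping.keys a \<subseteq> V" using a assms(1) unfolding keyed_def by blast
    have "(mon a :: ('v,'k) mpoly) \<in> MI V A" using mon_in_MI[OF assms(1) ka] a mdvd_refl by blast
    then have "(mon a :: ('v,'k) mpoly) \<in> MI V B" using e by simp
    then show "\<exists>b\<in>B. mdvd b a" using mon_in_MI[OF assms(2) ka] by blast
  qed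
  moreover have "\<forall>b\<in>B. \<exists>a\<in>A. mdvd a b"
  proof
    fix a assume a: "a \<in> B"
    have ka: "Poly_Mapping.keys a \<subseteq> V" using a assms(2) unfolding keyed_def by blast
    have "(mon a :: ('v,'k) mpoly) \<in> MI V B" using mon_in_MI[OF assms(2) ka] a mdvd_refl by blast
    then have "(mon a :: ('v,'k) mpoly) \<in> MI V A" using e by simp
    then show "\<exists>b\<in>A. mdvd b a" using mon_in_MI[OF assms(1) ka] by blast
  qed
  ultimately show "(\<forall>a\<in>A. \<exists>b\<in>B. mdvd b a) \<and> (\<forall>b\<in>B. \<exists>a\<in>A. mdvd a b)" ..
next
  assume h: "(\<forall>a\<in>A. \<exists>b\<in>B. mdvd b a) \<and> (\<forall>b\<in>B. \<exists>a\<in>A. mdvd a b)"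
  have 1: "MIset V A \<subseteq> (MIset V B :: ('v,'k) mpoly set)"
  proof
    fix p :: "('v,'k) mpoly" assume "p \<in> MIset V A"
    then have "p \<in> polyring V" "\<forall>m\<in>Poly_Mapping.keys p. \<exists>a\<in>A. mdvd a m" by (auto simp: MIset_def)
    moreover have "\<forall>m\<in>Poly_Mapping.keys p. \<exists>b\<in>B. mdvd b m"
    proof
      fix m assume "m \<in> Poly_Mapping.keys p"
      then obtain a where "a \<in> A" "mdvd a m" using calculation by blast
      then obtain b where "b \<in> B" "mdvd b a" using h by blast
      then show "\<exists>b\<in>B. mdvd b m" using \<open>mdvd a m\<close> mdvd_trans by blast
    qed
    ultimately show "p \<in> MIset V B" by (simp add: MIset_def)
  qed
  have 2: "MIset V B \<subseteq> (MIset V A :: ('v,'k) mpoly set)"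
  proof
    fix p :: "('v,'k) mpoly" assume "p \<in> MIset V B"
    then have "p \<in> polyring V" "\<forall>m\<in>Poly_Mapping.keys p. \<exists>a\<in>B. mdvd a m" by (auto simp: MIset_def)
    moreover have "\<forall>m\<in>Poly_Mapping.keys p. \<exists>b\<in>A. mdvd b m"
    proof
      fix m assume "m \<in> Poly_Mapping.keys p"
      then obtain a where "a \<in> B" "mdvd a m" using calculation by blast
      then obtain b where "b \<in> A" "mdvd b a" using h by blast
      then show "\<exists>b\<in>A. mdvd b m" using \<open>mdvd a m\<close> mdvd_trans by blast
    qed
    ultimately show "p \<in> MIset V A" by (simp add: MIset_def)
  qed
  show "(MI V A :: ('v,'k) mpoly set) = MI V B"
    unfolding MI_eq_MIset[OF assms(1)] MI_eq_MIset[OF assms(2)] using 1 2 by (rule subset_antisym)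
qed

lemma min_gens_MI:
  assumes "keyed V A" "\<And>a a'. a \<in> A \<Longrightarrow> a' \<in> A \<Longrightarrow> mdvd a' a \<Longrightarrow> a' = a"
  shows "min_gens V (MI V A :: ('v,'k::field) mpoly set) = A"
proof -
  have mem: "(mon m :: ('v,'k) mpoly) \<in> MI V A \<longleftrightarrow> Poly_Mapping.keys m \<subseteq> V \<and> (\<exists>a\<in>A. mdvd a m)" for m
  proof
    assume h: "(mon m :: ('v,'k) mpoly) \<in> MI V A"
    then have "mon m \<in> (polyring V :: ('v,'k) mpoly set)"
      using MI_eq_MIset[OF assms(1)] by (auto simp: MIset_def)
    then have "Poly_Mapping.keys m \<subseteq> V" using keys_mon unfolding polyring_def by blast
    then show "Poly_Mapping.keys m \<subseteq> V \<and> (\<exists>a\<in>A. mdvd a m)" using h mon_in_MI[OF assms(1)] by blast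
  qed (use mon_in_MI[OF assms(1)] in blast)
  show ?thesis
  proof (rule set_eqI)
    fix m
    show "m \<in> min_gens V (MI V A :: ('v,'k) mpoly set) \<longleftrightarrow> m \<in> A"
    proof
      assume "m \<in> min_gens V (MI V A :: ('v,'k) mpoly set)"
      then have h: "(mon m :: ('v,'k) mpoly) \<in> MI V A" "\<forall>m'. (mon m' :: ('v,'k) mpoly) \<in> MI V A \<and> mdvd m' m \<longrightarrow> m' = m"
        unfolding min_gens_def by auto
      then obtain a where a: "a \<in> A" "mdvd a m" using mem by blast
      have "Poly_Mapping.keys a \<subseteq> V" using a(1) assms(1) unfolding keyed_def by blast
      then have "(mon a :: ('v,'k) mpoly) \<in> MI V A" using mem a(1) mdvd_refl by blast
      then have "a = m" using h(2) a by blast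
      then show "m \<in> A" using a by simp
    next
      assume m: "m \<in> A"
      have "Poly_Mapping.keys m \<subseteq> V" using m assms(1) unfolding keyed_def by blast
      then have "(mon m :: ('v,'k) mpoly) \<in> MI V A" using mem m mdvd_refl by blast
      moreover have "\<forall>m'. (mon m' :: ('v,'k) mpoly) \<in> MI V A \<and> mdvd m' m \<longrightarrow> m' = m"
      proof (intro allI impI)
        fix m' assume "(mon m' :: ('v,'k) mpoly) \<in> MI V A \<and> mdvd m' m"
        then obtain a where "a \<in> A" "mdvd a m'" "mdvd m' m" using mem by blast
        then have "a = m" using assms(2)[OF m] mdvd_trans by blast
        then show "m' = m" using \<open>mdvd a m'\<close> \<open>mdvd m' m\<close> mdvd_antisym by blast
      qed
      ultimately show "m \<in> min_gens V (MI V A :: ('v,'k) mpoly set)" unfolding min_gens_def by blast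
    qed
  qed
qed


section \<open>Colon ideals of monomial ideals\<close>

lemma lookup_times_mon:
  "Poly_Mapping.lookup (g * mon u :: ('v,'k::field) mpoly) (m + u) = Poly_Mapping.lookup g m"
proof -
  have "g * mon u = (\<Sum>x\<in>Poly_Mapping.keys g. Poly_Mapping.single x (Poly_Mapping.lookup g x)) * Poly_Mapping.single u 1"
    by (subst pm_expand[of g]) (simp add: mon_def)
  also have "\<dots> = (\<Sum>x\<in>Poly_Mapping.keys g. Poly_Mapping.single (x + u) (Poly_Mapping.lookup g x))"
    by (simp add: sum_distrib_right mult_single)
  finally have e: "g * mon u = (\<Sum>x\<in>Poly_Mapping.keys g. Poly_Mapping.single (x + u) (Poly_Mapping.lookup g x))" .
  have "Poly_Mapping.lookup (g * mon u) (m + u) = (\<Sum>x\<in>Poly_Mapping.keys g. if x = m then Poly_Mapping.lookup g x else 0)"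
    unfolding e lookup_sum by (intro sum.cong refl) (simp add: lookup_single when_def)
  also have "\<dots> = Poly_Mapping.lookup g m" by (simp add: sum.delta in_keys_iff)
  finally show ?thesis .
qed

lemma keys_times_mon:
  "Poly_Mapping.keys (g * mon u :: ('v,'k::field) mpoly) = (\<lambda>m. m + u) ` Poly_Mapping.keys g"
proof
  show "Poly_Mapping.keys (g * mon u) \<subseteq> (\<lambda>m. m + u) ` Poly_Mapping.keys g"
  proof
    fix x assume "x \<in> Poly_Mapping.keys (g * mon u)"
    then obtain a b where "x = a + b" "a \<in> Poly_Mapping.keys g" "b \<in> Poly_Mapping.keys (mon u :: ('v,'k) mpoly)"
      using keys_mult[of g "mon u"] by blast
    then show "x \<in> (\<lambda>m. m + u) ` Poly_Mapping.keys g" by (simp add: keys_mon)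
  qed
next
  show "(\<lambda>m. m + u) ` Poly_Mapping.keys g \<subseteq> Poly_Mapping.keys (g * mon u)"
    using lookup_times_mon[of g u] by (auto simp: in_keys_iff)
qed

lemma mdvd_plus_iff: "mdvd a (m + u) \<longleftrightarrow> mdvd (a - u) m"
  unfolding mdvd_def by (simp add: lookup_add lookup_minus_nat le_diff_conv)

lemma keyed_minus: "keyed V A \<Longrightarrow> keyed V ((\<lambda>a. a - u) ` A)"
  unfolding keyed_def
proof
  fix b assume h: "\<forall>a\<in>A. Poly_Mapping.keys a \<subseteq> V" "b \<in> (\<lambda>a. a - u) ` A"
  then obtain a where "a \<in> A" "b = a - u" by blast
  then show "Poly_Mapping.keys b \<subseteq> V" using h(1) keys_minus_nat[of a u] by blast
qed

lemma colon_MI: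
  assumes "keyed V A" "Poly_Mapping.keys u \<subseteq> V"
  shows "colon V (MI V A) (mon u :: ('v,'k::field) mpoly) = MI V ((\<lambda>a. a - u) ` A)"
proof -
  have "g \<in> colon V (MI V A) (mon u) \<longleftrightarrow> g \<in> MIset V ((\<lambda>a. a - u) ` A)" for g :: "('v,'k) mpoly"
  proof
    assume "g \<in> colon V (MI V A) (mon u)"
    then have g: "g \<in> polyring V" "g * mon u \<in> MIset V A"
      unfolding colon_def MI_eq_MIset[OF assms(1)] by auto
    have "\<forall>m\<in>Poly_Mapping.keys g. \<exists>b\<in>(\<lambda>a. a - u) ` A. mdvd b m"
    proof
      fix m assume "m \<in> Poly_Mapping.keys g"
      then have "m + u \<in> Poly_Mapping.keys (g * mon u)" by (simp add: keys_times_mon)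
      then obtain a where "a \<in> A" "mdvd a (m + u)" using g(2) unfolding MIset_def by blast
      then show "\<exists>b\<in>(\<lambda>a. a - u) ` A. mdvd b m" by (auto simp: mdvd_plus_iff)
    qed
    then show "g \<in> MIset V ((\<lambda>a. a - u) ` A)" using g(1) by (simp add: MIset_def)
  next
    assume g: "g \<in> MIset V ((\<lambda>a. a - u) ` A)"
    have gp: "g \<in> polyring V" using g by (simp add: MIset_def)
    have "g * mon u \<in> polyring V" using gp assms(2) by (simp add: polyring_mult mon_polyring)
    moreover have "\<forall>x\<in>Poly_Mapping.keys (g * mon u). \<exists>a\<in>A. mdvd a x"
    proof
      fix x assume "x \<in> Poly_Mapping.keys (g * mon u)"
      then obtain m where m: "m \<in> Poly_Mapping.keys g" "x = m + u" by (auto simp: keys_times_mon)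
      then obtain a where "a \<in> A" "mdvd (a - u) m" using g unfolding MIset_def by blast
      then show "\<exists>a\<in>A. mdvd a x" using m(2) mdvd_plus_iff by blast
    qed
    ultimately have "g * mon u \<in> MIset V A" by (simp add: MIset_def)
    then show "g \<in> colon V (MI V A) (mon u)"
      unfolding colon_def MI_eq_MIset[OF assms(1)] using gp by simp
  qed
  then show ?thesis using MI_eq_MIset[OF keyed_minus[OF assms(1)]] by blast
qed

definition lq_step :: "('v \<Rightarrow>\<^sub>0 nat) set \<Rightarrow> ('v \<Rightarrow>\<^sub>0 nat) \<Rightarrow> bool" where
  "lq_step A u \<longleftrightarrow> (\<forall>a\<in>A. \<exists>a'\<in>A. \<exists>w. a' - u = Poly_Mapping.single w 1
                       \<and> Poly_Mapping.lookup u w < Poly_Mapping.lookup a w)"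

lemma var_image: "var ` W = mon ` ((\<lambda>w. Poly_Mapping.single w 1) ` W)"
  by (auto simp: var_def)

lemma lq_iff:
  assumes "keyed V A" "Poly_Mapping.keys u \<subseteq> V" "\<forall>a\<in>A. \<not> mdvd a u"
  shows "(\<exists>W\<subseteq>V. colon V (MI V A) (mon u :: ('v,'k::field) mpoly) = ideal_gen V (var ` W))
          \<longleftrightarrow> lq_step A u"
proof -
  let ?B = "(\<lambda>a. a - u) ` A"
  have kB: "keyed V ?B" by (rule keyed_minus[OF assms(1)])
  have kS: "keyed V ((\<lambda>w. Poly_Mapping.single w 1) ` W)" if "W \<subseteq> V" for W
    using that unfolding keyed_def by auto
  have eq: "colon V (MI V A) (mon u :: ('v,'k) mpoly) = ideal_gen V (var ` W) \<longleftrightarrow>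
       (\<forall>b\<in>?B. \<exists>s\<in>(\<lambda>w. Poly_Mapping.single w 1) ` W. mdvd s b) \<and>
       (\<forall>s\<in>(\<lambda>w. Poly_Mapping.single w 1) ` W. \<exists>b\<in>?B. mdvd b s)" if "W \<subseteq> V" for W
    unfolding colon_MI[OF assms(1,2)] var_image MI_def[symmetric]
    by (rule MI_eq_iff[OF kB kS[OF that]])
  have nz: "a - u \<noteq> 0" if "a \<in> A" for a
    using assms(3) that minus_eq_zero_iff_mdvd by blast
  show ?thesis
  proof
    assume "\<exists>W\<subseteq>V. colon V (MI V A) (mon u :: ('v,'k) mpoly) = ideal_gen V (var ` W)"
    then obtain W where W: "W \<subseteq> V" "colon V (MI V A) (mon u :: ('v,'k) mpoly) = ideal_gen V (var ` W)"
      by blast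
    note h = eq[OF W(1), THEN iffD1, OF W(2)]
    show "lq_step A u" unfolding lq_step_def
    proof
      fix a assume a: "a \<in> A"
      have "a - u \<in> (\<lambda>a. a - u) ` A" using a by blast
      then obtain w where w: "w \<in> W" "mdvd (Poly_Mapping.single w 1) (a - u)" using h by blast
      have "1 \<le> Poly_Mapping.lookup (a - u) w" using mdvd_single[THEN iffD1, OF w(2)] .
      then have lt: "Poly_Mapping.lookup u w < Poly_Mapping.lookup a w"
        by (simp add: lookup_minus_nat)
      have "Poly_Mapping.single w 1 \<in> (\<lambda>w. Poly_Mapping.single w 1) ` W" using w(1) by blast
      then obtain a' where a': "a' \<in> A" "mdvd (a' - u) (Poly_Mapping.single w 1)" using h by blast
      then have "a' - u = Poly_Mapping.single w 1" using mdvd_into_single[OF a'(2) nz[OF a'(1)]] by blast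
      then show "\<exists>a'\<in>A. \<exists>w. a' - u = Poly_Mapping.single w 1 \<and> Poly_Mapping.lookup u w < Poly_Mapping.lookup a w"
        using a'(1) lt by blast
    qed
  next
    assume lq: "lq_step A u"
    define W where "W = {w. \<exists>a'\<in>A. a' - u = Poly_Mapping.single w 1}"
    have WV: "W \<subseteq> V"
    proof
      fix w assume "w \<in> W"
      then obtain a' where "a' \<in> A" "a' - u = Poly_Mapping.single w 1" unfolding W_def by blast
      then have "w \<in> Poly_Mapping.keys (a' - u)" by simp
      then have "w \<in> Poly_Mapping.keys a'" using keys_minus_nat[of a' u] by blast
      then show "w \<in> V" using assms(1) \<open>a' \<in> A\<close> unfolding keyed_def by blast
    qed
    have "(\<forall>b\<in>?B. \<exists>s\<in>(\<lambda>w. Poly_Mapping.single w 1) ` W. mdvd s b) \<and>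
          (\<forall>s\<in>(\<lambda>w. Poly_Mapping.single w 1) ` W. \<exists>b\<in>?B. mdvd b s)"
    proof
      show "\<forall>b\<in>?B. \<exists>s\<in>(\<lambda>w. Poly_Mapping.single w 1) ` W. mdvd s b"
      proof
        fix b assume "b \<in> ?B"
        then obtain a where a: "a \<in> A" "b = a - u" by blast
        then obtain a' w where aw: "a' \<in> A" "a' - u = Poly_Mapping.single w 1" "Poly_Mapping.lookup u w < Poly_Mapping.lookup a w"
          using lq unfolding lq_step_def by blast
        have "w \<in> W" unfolding W_def using aw(1,2) by blast
        moreover have "1 \<le> Poly_Mapping.lookup b w" using aw(3) a(2) by (simp add: lookup_minus_nat)
        then have "mdvd (Poly_Mapping.single w 1) b" by (rule mdvd_single[THEN iffD2])
        ultimately have "w \<in> W" "mdvd (Poly_Mapping.single w 1) b" by blast+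
        then show "\<exists>s\<in>(\<lambda>w. Poly_Mapping.single w 1) ` W. mdvd s b" by blast
      qed
      show "\<forall>s\<in>(\<lambda>w. Poly_Mapping.single w 1) ` W. \<exists>b\<in>?B. mdvd b s"
      proof
        fix s :: "'v \<Rightarrow>\<^sub>0 nat" assume "s \<in> (\<lambda>w. Poly_Mapping.single w 1) ` W"
        then obtain w where w: "w \<in> W" "s = Poly_Mapping.single w (1::nat)" by (rule imageE)
        then obtain a' where a': "a' \<in> A" "a' - u = Poly_Mapping.single w 1"
          unfolding W_def by blast
        have "a' - u \<in> ?B" using a'(1) by (rule imageI)
        moreover have "mdvd (a' - u) s" using a'(2) w(2) by simp
        ultimately show "\<exists>b\<in>?B. mdvd b s" by blast
      qed
    qed
    then have "colon V (MI V A) (mon u :: ('v,'k) mpoly) = ideal_gen V (var ` W)"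
      by (rule eq[OF WV, THEN iffD2])
    then show "\<exists>W\<subseteq>V. colon V (MI V A) (mon u :: ('v,'k) mpoly) = ideal_gen V (var ` W)"
      using WV by blast
  qed
qed

definition LQL :: "('v \<Rightarrow>\<^sub>0 nat) list \<Rightarrow> bool" where
  "LQL us \<longleftrightarrow> (\<forall>j<length us. lq_step (set (take j us)) (us ! j))"

definition antichain :: "('v \<Rightarrow>\<^sub>0 nat) set \<Rightarrow> bool" where
  "antichain X \<longleftrightarrow> (\<forall>a\<in>X. \<forall>b\<in>X. mdvd a b \<longrightarrow> a = b)"

lemma lin_quot_iff:
  fixes us :: "('v \<Rightarrow>\<^sub>0 nat) list"
  assumes "keyed V (set us)" "distinct us" "antichain (set us)"
  shows "lin_quot_wrt V us TYPE('k::field) \<longleftrightarrow> LQL us"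
proof -
  have step: "(\<exists>W\<subseteq>V. colon V (ideal_gen V ((mon :: _ \<Rightarrow> ('v,'k) mpoly) ` set (take j us))) (mon (us ! j))
                   = ideal_gen V (var ` W)) \<longleftrightarrow> lq_step (set (take j us)) (us ! j)" if j: "j < length us" for j
  proof -
    have k1: "keyed V (set (take j us))" using assms(1) set_take_subset[of j us] unfolding keyed_def by blast
    have k2: "Poly_Mapping.keys (us ! j) \<subseteq> V" using assms(1) j unfolding keyed_def by simp
    have na: "\<forall>a\<in>set (take j us). \<not> mdvd a (us ! j)"
    proof
      fix a assume "a \<in> set (take j us)"
      then obtain i where i: "i < j" "a = us ! i" using j by (auto simp: in_set_conv_nth)
      then have "a \<noteq> us ! j" using assms(2) j by (simp add: nth_eq_iff_index_eq)
      moreover have "a \<in> set us" "us ! j \<in> set us" using i j by auto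
      ultimately show "\<not> mdvd a (us ! j)" using assms(3) unfolding antichain_def by blast
    qed
    show ?thesis using lq_iff[OF k1 k2 na, where 'k='k] unfolding MI_def .
  qed
  have z: "lq_step (set (take 0 us)) (us ! 0)" by (simp add: lq_step_def)
  show ?thesis
    unfolding lin_quot_wrt_def LQL_def
  proof
    assume h: "\<forall>j. 1 \<le> j \<and> j < length us \<longrightarrow>
        (\<exists>W\<subseteq>V. colon V (ideal_gen V ((mon :: _ \<Rightarrow> ('v,'k) mpoly) ` set (take j us))) (mon (us ! j)) = ideal_gen V (var ` W))"
    show "\<forall>j<length us. lq_step (set (take j us)) (us ! j)"
    proof (intro allI impI)
      fix j assume j: "j < length us"
      show "lq_step (set (take j us)) (us ! j)"
      proof (cases "j = 0")
        case True then show ?thesis using z by simp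
      next
        case False
        then have "1 \<le> j \<and> j < length us" using j by simp
        then have "\<exists>W\<subseteq>V. colon V (ideal_gen V ((mon :: _ \<Rightarrow> ('v,'k) mpoly) ` set (take j us))) (mon (us ! j)) = ideal_gen V (var ` W)"
          using h by blast
        then show ?thesis using step[OF j] by blast
      qed
    qed
  next
    assume h: "\<forall>j<length us. lq_step (set (take j us)) (us ! j)"
    show "\<forall>j. 1 \<le> j \<and> j < length us \<longrightarrow>
        (\<exists>W\<subseteq>V. colon V (ideal_gen V ((mon :: _ \<Rightarrow> ('v,'k) mpoly) ` set (take j us))) (mon (us ! j)) = ideal_gen V (var ` W))"
    proof (intro allI impI)
      fix j assume "1 \<le> j \<and> j < length us"
      then have j: "j < length us" by simp
      show "\<exists>W\<subseteq>V. colon V (ideal_gen V ((mon :: _ \<Rightarrow> ('v,'k) mpoly) ` set (take j us))) (mon (us ! j)) = ideal_gen V (var ` W)"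
        using step[OF j] h j by blast
    qed
  qed
qed

lemma has_lin_quot_iff:
  assumes "J = MI V X" "keyed V X" "antichain X"
  shows "has_lin_quot V (J :: ('v,'k::field) mpoly set) \<longleftrightarrow> (\<exists>us. distinct us \<and> set us = X \<and> LQL us)"
proof -
  have mg: "min_gens V J = X"
    unfolding assms(1) by (rule min_gens_MI[OF assms(2)]) (use assms(3) in \<open>auto simp: antichain_def\<close>)
  have "lin_quot_wrt V us TYPE('k) \<longleftrightarrow> LQL us" if "distinct us" "set us = X" for us
    using lin_quot_iff[where 'k='k and V=V and us=us] assms(2,3) that by simp
  then show ?thesis unfolding has_lin_quot_def mg by blast
qed

section \<open>Order-theoretic reformulation\<close>

definition lqrel :: "(('v \<Rightarrow>\<^sub>0 nat) \<Rightarrow> ('v \<Rightarrow>\<^sub>0 nat) \<Rightarrow> bool) \<Rightarrow> ('v \<Rightarrow>\<^sub>0 nat) set \<Rightarrow> bool" where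
  "lqrel P X \<longleftrightarrow> (\<forall>y\<in>X. \<forall>t\<in>X. P t y \<longrightarrow>
      (\<exists>t'\<in>X. P t' y \<and> (\<exists>w. t' - y = Poly_Mapping.single w 1 \<and> Poly_Mapping.lookup y w < Poly_Mapping.lookup t w)))"

lemma LQL_iff_lqrel:
  fixes key :: "('v \<Rightarrow>\<^sub>0 nat) \<Rightarrow> 'b::linorder"
  assumes "sorted_wrt (\<lambda>x y. key x < key y) us"
  shows "LQL us \<longleftrightarrow> lqrel (\<lambda>x y. key x < key y) (set us)"
proof -
  have nl: "\<And>i j. i < j \<Longrightarrow> j < length us \<Longrightarrow> key (us ! i) < key (us ! j)"
    using assms by (simp add: sorted_wrt_iff_nth_less)
  have tk: "set (take j us) = {t \<in> set us. key t < key (us ! j)}" if j: "j < length us" for j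
  proof
    show "set (take j us) \<subseteq> {t \<in> set us. key t < key (us ! j)}"
    proof
      fix t assume "t \<in> set (take j us)"
      then obtain i where "i < j" "t = us ! i" using j by (auto simp: in_set_conv_nth)
      then show "t \<in> {t \<in> set us. key t < key (us ! j)}" using nl j by auto
    qed
    show "{t \<in> set us. key t < key (us ! j)} \<subseteq> set (take j us)"
    proof
      fix t assume t: "t \<in> {t \<in> set us. key t < key (us ! j)}"
      then obtain i where i: "i < length us" "t = us ! i" by (auto simp: in_set_conv_nth)
      have "i < j"
      proof (rule ccontr)
        assume "\<not> i < j"
        then have "i = j \<or> j < i" by auto
        then show False using t i nl[of j i] by auto
      qed
      then show "t \<in> set (take j us)" using i j by (auto simp: in_set_conv_nth)
    qed
  qed
  show ?thesis
  proof
    assume h: "LQL us"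
    show "lqrel (\<lambda>x y. key x < key y) (set us)" unfolding lqrel_def
    proof (intro ballI impI)
      fix y t assume y: "y \<in> set us" and t: "t \<in> set us" "key t < key y"
      obtain j where j: "j < length us" "y = us ! j" using y by (auto simp: in_set_conv_nth)
      have "lq_step {t \<in> set us. key t < key (us ! j)} (us ! j)" using h j unfolding LQL_def tk[OF j(1), symmetric] by blast
      then show "\<exists>t'\<in>set us. key t' < key y \<and> (\<exists>w. t' - y = Poly_Mapping.single w 1 \<and> Poly_Mapping.lookup y w < Poly_Mapping.lookup t w)"
        using t j(2) unfolding lq_step_def by blast
    qed
  next
    assume h: "lqrel (\<lambda>x y. key x < key y) (set us)"
    show "LQL us" unfolding LQL_def
    proof (intro allI impI)
      fix j assume j: "j < length us"
      have "us ! j \<in> set us" using j by simp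
      then show "lq_step (set (take j us)) (us ! j)" unfolding tk[OF j] lq_step_def
        using h unfolding lqrel_def by blast
    qed
  qed
qed

lemma lqrel_to_list:
  fixes key :: "('v \<Rightarrow>\<^sub>0 nat) \<Rightarrow> 'b::linorder"
  assumes "finite X" "inj_on key X" "lqrel (\<lambda>x y. key x < key y) X"
  shows "\<exists>us. distinct us \<and> set us = X \<and> LQL us"
proof -
  interpret F: folding_insort_key "(\<le>) :: 'b \<Rightarrow> 'b \<Rightarrow> bool" "(<)" X key
    by unfold_locales (rule assms(2))
  obtain us where us: "sorted_wrt (<) (map key us)" "set us = X" "length us = card X"
    using F.finite_set_strict_sorted[OF subset_refl assms(1)] by blast
  have d: "distinct us" using us(2,3) by (simp add: card_distinct)
  have sw: "sorted_wrt (\<lambda>x y. key x < key y) us" using us(1) by (simp add: sorted_wrt_map)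
  show ?thesis using d us(2) LQL_iff_lqrel[OF sw] assms(3) by auto
qed

definition idx :: "'a list \<Rightarrow> 'a \<Rightarrow> nat" where
  "idx us x = (THE i. i < length us \<and> us ! i = x)"

lemma idx_nth: "distinct us \<Longrightarrow> i < length us \<Longrightarrow> idx us (us ! i) = i"
  unfolding idx_def by (rule the_equality) (auto simp: nth_eq_iff_index_eq)

lemma sorted_idx: "distinct us \<Longrightarrow> sorted_wrt (\<lambda>x y. idx us x < idx us y) us"
  by (simp add: sorted_wrt_iff_nth_less idx_nth)

lemma inj_idx: "distinct us \<Longrightarrow> inj_on (idx us) (set us)"
  by (auto simp: inj_on_def in_set_conv_nth idx_nth)


definition deg :: "('v \<Rightarrow>\<^sub>0 nat) \<Rightarrow> nat" where
  "deg m = sum (Poly_Mapping.lookup m) (Poly_Mapping.keys m)"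

lemma deg_less:
  assumes "mdvd a b" "a \<noteq> b"
  shows "deg a < deg b"
proof -
  have ks: "Poly_Mapping.keys a \<subseteq> Poly_Mapping.keys b" using mdvd_keys[OF assms(1)] .
  have "deg a = sum (Poly_Mapping.lookup a) (Poly_Mapping.keys b)"
    unfolding deg_def by (rule sum.mono_neutral_left) (use ks in \<open>auto simp: in_keys_iff\<close>)
  also have "\<dots> < sum (Poly_Mapping.lookup b) (Poly_Mapping.keys b)"
  proof (rule sum_strict_mono_ex1)
    show "finite (Poly_Mapping.keys b)" by simp
    show "\<forall>x\<in>Poly_Mapping.keys b. Poly_Mapping.lookup a x \<le> Poly_Mapping.lookup b x"
      using assms(1) unfolding mdvd_def by blast
    obtain x where "Poly_Mapping.lookup a x \<noteq> Poly_Mapping.lookup b x" using assms(2) pm_eq_iff[of a b] by blast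
    then have lt: "Poly_Mapping.lookup a x < Poly_Mapping.lookup b x" using assms(1) unfolding mdvd_def
      by (metis le_neq_implies_less)
    then have "x \<in> Poly_Mapping.keys b" by (simp add: in_keys_iff)
    then show "\<exists>x\<in>Poly_Mapping.keys b. Poly_Mapping.lookup a x < Poly_Mapping.lookup b x" using lt by blast
  qed
  finally show ?thesis unfolding deg_def .
qed

lemma min_gens_dominate:
  "mon m \<in> I \<Longrightarrow> \<exists>g\<in>min_gens V (I :: ('v,'k::comm_ring_1) mpoly set). mdvd g m"
proof (induction "deg m" arbitrary: m rule: less_induct)
  case less
  show ?case
  proof (cases "m \<in> min_gens V I")
    case True then show ?thesis using mdvd_refl by blast
  next
    case False
    then obtain m' where m': "mon m' \<in> I" "mdvd m' m" "m' \<noteq> m"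
      using less.prems unfolding min_gens_def by blast
    have "deg m' < deg m" by (rule deg_less[OF m'(2) m'(3)])
    then obtain g where "g \<in> min_gens V I" "mdvd g m'" using less.hyps m'(1) by blast
    then show ?thesis using m'(2) mdvd_trans by blast
  qed
qed

lemma monomial_ideal_struct:
  assumes "monomial_ideal V (I :: ('v,'k::field) mpoly set)"
  shows "keyed V (min_gens V I)" "antichain (min_gens V I)" "I = MI V (min_gens V I)"
proof -
  let ?E = "{m. mon m \<in> I}"
  have Ip: "I \<subseteq> polyring V" using assms unfolding monomial_ideal_def is_ideal_def by blast
  have kE: "keyed V ?E" unfolding keyed_def
  proof
    fix m assume "m \<in> ?E"
    then have "(mon m :: ('v,'k) mpoly) \<in> polyring V" using Ip by blast
    then show "Poly_Mapping.keys m \<subseteq> V" by (simp add: polyring_def keys_mon)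
  qed
  have sub: "min_gens V I \<subseteq> ?E" unfolding min_gens_def by blast
  show kG: "keyed V (min_gens V I)" using kE sub unfolding keyed_def by blast
  show "antichain (min_gens V I)" unfolding antichain_def min_gens_def by blast
  have "I = ideal_gen V {mon m | m. mon m \<in> I}" using assms unfolding monomial_ideal_def by blast
  also have "{mon m | m. mon m \<in> I} = mon ` ?E" by blast
  finally have IE: "I = MI V ?E" unfolding MI_def .
  have "MI V ?E = (MI V (min_gens V I) :: ('v,'k) mpoly set)"
  proof (subst MI_eq_iff[OF kE kG], intro conjI ballI)
    fix a assume "a \<in> ?E"
    then show "\<exists>b\<in>min_gens V I. mdvd b a" using min_gens_dominate by blast
  next
    fix b assume "b \<in> min_gens V I"
    then show "\<exists>a\<in>?E. mdvd a b" using sub mdvd_refl by blast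
  qed
  then show "I = MI V (min_gens V I)" using IE by simp
qed

lemma keyed_plus: "keyed V A \<Longrightarrow> keyed V B \<Longrightarrow> keyed V {a + b | a b. a \<in> A \<and> b \<in> B}"
  unfolding keyed_def by (auto simp: keys_add_nat; blast)

lemma MI_mult:
  assumes "keyed V A" "keyed V B"
  shows "ideal_mult V (MI V A) (MI V B) = (MI V {a + b | a b. a \<in> A \<and> b \<in> B} :: ('v,'k::field) mpoly set)"
proof
  let ?C = "{a + b | a b. a \<in> A \<and> b \<in> B}"
  have kC: "keyed V ?C" by (rule keyed_plus[OF assms])
  show "ideal_mult V (MI V A) (MI V B) \<subseteq> (MI V ?C :: ('v,'k) mpoly set)"
    unfolding ideal_mult_def
  proof (rule ig_least[OF _ ideal_like_MI[OF kC]], rule subsetI)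
    fix r :: "('v,'k) mpoly" assume "r \<in> {p * q | p q. p \<in> MI V A \<and> q \<in> MI V B}"
    then obtain p q where pq: "r = p * q" "p \<in> MI V A" "q \<in> MI V B" by blast
    then have p: "p \<in> MIset V A" and q: "q \<in> MIset V B"
      using MI_eq_MIset[OF assms(1)] MI_eq_MIset[OF assms(2)] by auto
    have "\<forall>m\<in>Poly_Mapping.keys (p * q). \<exists>c\<in>?C. mdvd c m"
    proof
      fix m assume "m \<in> Poly_Mapping.keys (p * q)"
      then obtain x y where xy: "m = x + y" "x \<in> Poly_Mapping.keys p" "y \<in> Poly_Mapping.keys q"
        using keys_mult[of p q] by blast
      obtain a where a: "a \<in> A" "mdvd a x" using p xy(2) unfolding MIset_def by blast
      obtain b where b: "b \<in> B" "mdvd b y" using q xy(3) unfolding MIset_def by blast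
      have "a + b \<in> ?C" using a(1) b(1) by blast
      moreover have "mdvd (a + b) m" using mdvd_add[OF a(2) b(2)] xy(1) by simp
      ultimately show "\<exists>c\<in>?C. mdvd c m" by blast
    qed
    moreover have "p * q \<in> polyring V" using p q unfolding MIset_def by (simp add: polyring_mult)
    ultimately show "r \<in> MI V ?C" unfolding pq(1) MI_eq_MIset[OF kC] MIset_def by blast
  qed
  show "(MI V ?C :: ('v,'k) mpoly set) \<subseteq> ideal_mult V (MI V A) (MI V B)"
    unfolding MI_def ideal_mult_def
  proof (rule ig_mono, rule subsetI)
    fix r :: "('v,'k) mpoly" assume "r \<in> mon ` ?C"
    then obtain a b where ab: "r = mon (a + b)" "a \<in> A" "b \<in> B" by blast
    have "mon a \<in> ideal_gen V (mon ` A)" using ab(2) by (intro ig_gen imageI)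
    moreover have "mon b \<in> ideal_gen V (mon ` B)" using ab(3) by (intro ig_gen imageI)
    moreover have "r = mon a * mon b" using ab(1) by (simp add: mon_mult)
    ultimately show "r \<in> {p * q |p q. p \<in> ideal_gen V (mon ` A) \<and> q \<in> ideal_gen V (mon ` B)}" by blast
  qed
qed

fun sumset :: "('v \<Rightarrow>\<^sub>0 nat) set \<Rightarrow> nat \<Rightarrow> ('v \<Rightarrow>\<^sub>0 nat) set" where
  "sumset B 0 = {0}"
| "sumset B (Suc d) = {b + s | b s. b \<in> B \<and> s \<in> sumset B d}"

lemma keyed_sumset:
  assumes "keyed V B" shows "keyed V (sumset B d)"
proof (induction d)
  case 0 show ?case by (simp add: keyed_def)
next
  case (Suc d) then show ?case using keyed_plus[OF assms Suc] by simp
qed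

lemma finite_plus: "finite A \<Longrightarrow> finite B \<Longrightarrow> finite {a + b | a b. a \<in> A \<and> b \<in> B}"
proof -
  assume "finite A" "finite B"
  then have "finite ((\<lambda>(a, b). a + b) ` (A \<times> B))" by simp
  moreover have "{a + b | a b. a \<in> A \<and> b \<in> B} = (\<lambda>(a, b). a + b) ` (A \<times> B)" by auto
  ultimately show ?thesis by simp
qed

lemma finite_sumset: "finite B \<Longrightarrow> finite (sumset B d)"
  by (induction d) (simp_all add: finite_plus)

lemma ig_one: "ideal_gen V {1} = (MI V {0} :: ('v,'k::comm_ring_1) mpoly set)"
  unfolding MI_def by (simp add: mon_0)

lemma MI_pow:
  assumes "keyed V B"
  shows "ideal_pow V (MI V B) d = (MI V (sumset B d) :: ('v,'k::field) mpoly set)"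
proof (induction d)
  case 0 then show ?case by (simp add: ig_one)
next
  case (Suc d)
  then show ?case by (simp add: MI_mult[OF assms keyed_sumset[OF assms]])
qed


definition blk :: "(nat \<Rightarrow> nat) \<Rightarrow> nat \<Rightarrow> (nat \<times> nat) set" where
  "blk k i = {(i, j) | j. j < k i}"

definition bsum :: "(nat \<Rightarrow> nat) \<Rightarrow> (nat \<times> nat \<Rightarrow>\<^sub>0 nat) \<Rightarrow> nat \<Rightarrow> nat" where
  "bsum k v i = (\<Sum>j<k i. Poly_Mapping.lookup v (i, j))"

definition PB :: "(nat \<Rightarrow> nat) \<Rightarrow> nat \<Rightarrow> (nat \<times> nat \<Rightarrow>\<^sub>0 nat) set" where
  "PB k i = (\<lambda>j. Poly_Mapping.single (i, j) 1) ` {..<k i}"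

definition rs :: "('a \<Rightarrow>\<^sub>0 nat) \<Rightarrow> 'a set \<Rightarrow> 'a \<Rightarrow>\<^sub>0 nat" where
  "rs v C = Abs_poly_mapping (\<lambda>x. if x \<in> C then Poly_Mapping.lookup v x else 0)"

lemma lookup_rs: "Poly_Mapping.lookup (rs v C) x = (if x \<in> C then Poly_Mapping.lookup v x else 0)"
proof -
  have "{x. (if x \<in> C then Poly_Mapping.lookup v x else 0) \<noteq> 0} \<subseteq> Poly_Mapping.keys v"
    by (auto simp: in_keys_iff split: if_splits)
  then have "finite {x. (if x \<in> C then Poly_Mapping.lookup v x else 0) \<noteq> 0}"
    by (rule finite_subset) simp
  then show ?thesis unfolding rs_def by simp
qed

lemma bsum_add: "bsum k (a + b) i = bsum k a i + bsum k b i"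
  by (simp add: bsum_def lookup_add sum.distrib)

lemma bsum_single: "bsum k (Poly_Mapping.single (i', j) 1) i = (if i' = i \<and> j < k i then 1 else 0)"
proof (cases "i' = i")
  case True
  have "bsum k (Poly_Mapping.single (i', j) 1) i = (\<Sum>j'<k i. if j = j' then 1 else 0)"
    unfolding bsum_def using True by (intro sum.cong refl) (simp add: lookup_single when_def)
  also have "\<dots> = (if j < k i then 1 else 0)" by (simp add: sum.delta)
  finally show ?thesis using True by simp
next
  case False
  then show ?thesis unfolding bsum_def by (simp add: lookup_single when_def)
qed

lemma bsum_zero: "(\<And>j. j < k i \<Longrightarrow> Poly_Mapping.lookup v (i, j) = 0) \<Longrightarrow> bsum k v i = 0"
  unfolding bsum_def by simp

lemma lookup_outside: "Poly_Mapping.keys v \<subseteq> C \<Longrightarrow> x \<notin> C \<Longrightarrow> Poly_Mapping.lookup v x = 0"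
  by (auto simp: in_keys_iff)

lemma bsum_outside: "Poly_Mapping.keys v \<subseteq> C \<Longrightarrow> C \<inter> blk k i = {} \<Longrightarrow> bsum k v i = 0"
  by (rule bsum_zero, rule lookup_outside) (auto simp: blk_def)

lemma bsum_pos:
  assumes "bsum k v i \<noteq> 0" shows "\<exists>j<k i. Poly_Mapping.lookup v (i, j) \<noteq> 0"
proof (rule ccontr)
  assume "\<not> (\<exists>j<k i. Poly_Mapping.lookup v (i, j) \<noteq> 0)"
  then have "bsum k v i = 0" by (intro bsum_zero) auto
  then show False using assms by simp
qed

lemma blk_disj: "i \<noteq> i' \<Longrightarrow> blk k i \<inter> blk k i' = {}"
  by (auto simp: blk_def)

lemma sumset_PB: "sumset (PB k i) d = {v. Poly_Mapping.keys v \<subseteq> blk k i \<and> bsum k v i = d}"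
proof (induction d)
  case 0
  show ?case
  proof
    show "sumset (PB k i) 0 \<subseteq> {v. Poly_Mapping.keys v \<subseteq> blk k i \<and> bsum k v i = 0}"
      by (simp add: bsum_def)
    show "{v. Poly_Mapping.keys v \<subseteq> blk k i \<and> bsum k v i = 0} \<subseteq> sumset (PB k i) 0"
    proof
      fix v assume v: "v \<in> {v. Poly_Mapping.keys v \<subseteq> blk k i \<and> bsum k v i = 0}"
      have "Poly_Mapping.lookup v x = 0" for x
      proof (cases "x \<in> blk k i")
        case True
        then obtain j where j: "x = (i, j)" "j < k i" by (auto simp: blk_def)
        have "(\<Sum>j<k i. Poly_Mapping.lookup v (i, j)) = 0" using v by (simp add: bsum_def)
        then show ?thesis using j by simp
      next
        case False then show ?thesis using v lookup_outside[of v "blk k i" x] by simp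
      qed
      then have "v = 0" by (simp add: pm_eq_iff)
      then show "v \<in> sumset (PB k i) 0" by simp
    qed
  qed
next
  case (Suc d)
  show ?case
  proof
    show "sumset (PB k i) (Suc d) \<subseteq> {v. Poly_Mapping.keys v \<subseteq> blk k i \<and> bsum k v i = Suc d}"
    proof
      fix v assume "v \<in> sumset (PB k i) (Suc d)"
      then obtain b s where bs: "v = b + s" "b \<in> PB k i" "s \<in> sumset (PB k i) d" by auto
      obtain j where j: "j < k i" "b = Poly_Mapping.single (i, j) 1" using bs(2) unfolding PB_def by blast
      have s: "Poly_Mapping.keys s \<subseteq> blk k i" "bsum k s i = d" using bs(3) Suc.IH by auto
      have "Poly_Mapping.keys v \<subseteq> blk k i" using s(1) j unfolding bs(1) keys_add_nat by (auto simp: blk_def)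
      moreover have "bsum k v i = Suc d" unfolding bs(1) bsum_add j(2) bsum_single using j(1) s(2) by simp
      ultimately show "v \<in> {v. Poly_Mapping.keys v \<subseteq> blk k i \<and> bsum k v i = Suc d}" by simp
    qed
    show "{v. Poly_Mapping.keys v \<subseteq> blk k i \<and> bsum k v i = Suc d} \<subseteq> sumset (PB k i) (Suc d)"
    proof
      fix v assume v: "v \<in> {v. Poly_Mapping.keys v \<subseteq> blk k i \<and> bsum k v i = Suc d}"
      then obtain j where j: "j < k i" "Poly_Mapping.lookup v (i, j) \<noteq> 0" using bsum_pos[of k v i] by auto
      define b where "b = Poly_Mapping.single (i, j) (1::nat)"
      define s where "s = v - b"
      have vbs: "v = b + s" unfolding s_def b_def pm_eq_iff
        using j(2) by (auto simp: lookup_add lookup_minus_nat lookup_single when_def)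
      have ks: "Poly_Mapping.keys s \<subseteq> blk k i" using v keys_minus_nat[of v b] unfolding s_def by auto
      have "bsum k v i = 1 + bsum k s i" unfolding vbs bsum_add b_def bsum_single using j(1) by simp
      then have "bsum k s i = d" using v by simp
      then have "s \<in> sumset (PB k i) d" using ks Suc.IH by simp
      moreover have "b \<in> PB k i" unfolding b_def PB_def using j(1) by simp
      ultimately show "v \<in> sumset (PB k i) (Suc d)" using vbs by auto
    qed
  qed
qed

definition Yf :: "(nat \<Rightarrow> nat) \<Rightarrow> (nat \<Rightarrow>\<^sub>0 nat) \<Rightarrow> nat list \<Rightarrow> (nat \<times> nat \<Rightarrow>\<^sub>0 nat) set" where
  "Yf k a is = foldr (\<lambda>i Y. {s + y | s y. s \<in> sumset (PB k i) (Poly_Mapping.lookup a i) \<and> y \<in> Y}) is {0}"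

lemma Yf_Nil: "Yf k a [] = {0}" by (simp add: Yf_def)

lemma Yf_Cons: "Yf k a (i # is) = {s + y | s y. s \<in> sumset (PB k i) (Poly_Mapping.lookup a i) \<and> y \<in> Yf k a is}"
  by (simp add: Yf_def)

lemma finite_PB: "finite (PB k i)" by (simp add: PB_def)

lemma finite_Yf: "finite (Yf k a is)"
  by (induction "is") (simp_all add: Yf_Nil Yf_Cons finite_plus finite_sumset finite_PB)

lemma Yf_char:
  "distinct is \<Longrightarrow> Yf k a is = {v. Poly_Mapping.keys v \<subseteq> (\<Union>i\<in>set is. blk k i) \<and> (\<forall>i\<in>set is. bsum k v i = Poly_Mapping.lookup a i)}"
proof (induction "is")
  case Nil
  show ?case by (auto simp: Yf_Nil)
next
  case (Cons i "is")
  then have ni: "i \<notin> set is" and IH: "Yf k a is = {v. Poly_Mapping.keys v \<subseteq> (\<Union>i\<in>set is. blk k i) \<and> (\<forall>i\<in>set is. bsum k v i = Poly_Mapping.lookup a i)}"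
    by auto
  have disj: "(\<Union>i\<in>set is. blk k i) \<inter> blk k i = {}" using ni by (auto simp: blk_def)
  have disj2: "blk k i \<inter> blk k i' = {}" if "i' \<in> set is" for i' using ni that by (auto simp: blk_def)
  show ?case
  proof
    show "Yf k a (i # is) \<subseteq> {v. Poly_Mapping.keys v \<subseteq> (\<Union>i\<in>set (i # is). blk k i) \<and> (\<forall>i\<in>set (i # is). bsum k v i = Poly_Mapping.lookup a i)}"
    proof
      fix v assume "v \<in> Yf k a (i # is)"
      then obtain s y where sy: "v = s + y" "s \<in> sumset (PB k i) (Poly_Mapping.lookup a i)" "y \<in> Yf k a is"
        unfolding Yf_Cons by blast
      have s: "Poly_Mapping.keys s \<subseteq> blk k i" "bsum k s i = Poly_Mapping.lookup a i" using sy(2) sumset_PB by auto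
      have y: "Poly_Mapping.keys y \<subseteq> (\<Union>i\<in>set is. blk k i)" "\<forall>i\<in>set is. bsum k y i = Poly_Mapping.lookup a i"
        using sy(3) IH by auto
      have "Poly_Mapping.keys v \<subseteq> (\<Union>i\<in>set (i # is). blk k i)" using s(1) y(1) unfolding sy(1) keys_add_nat by auto
      moreover have "\<forall>i'\<in>set (i # is). bsum k v i' = Poly_Mapping.lookup a i'"
      proof
        fix i' assume i': "i' \<in> set (i # is)"
        show "bsum k v i' = Poly_Mapping.lookup a i'"
        proof (cases "i' = i")
          case True
          have "bsum k y i = 0" using bsum_outside[OF y(1) disj] .
          then show ?thesis unfolding sy(1) bsum_add True using s(2) by simp
        next
          case False
          then have "i' \<in> set is" using i' by simp
          then have "bsum k s i' = 0" using bsum_outside[OF s(1) disj2] by blast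
          then show ?thesis unfolding sy(1) bsum_add using y(2) \<open>i' \<in> set is\<close> by simp
        qed
      qed
      ultimately show "v \<in> {v. Poly_Mapping.keys v \<subseteq> (\<Union>i\<in>set (i # is). blk k i) \<and> (\<forall>i\<in>set (i # is). bsum k v i = Poly_Mapping.lookup a i)}"
        by blast
    qed
    show "{v. Poly_Mapping.keys v \<subseteq> (\<Union>i\<in>set (i # is). blk k i) \<and> (\<forall>i\<in>set (i # is). bsum k v i = Poly_Mapping.lookup a i)} \<subseteq> Yf k a (i # is)"
    proof
      fix v assume v: "v \<in> {v. Poly_Mapping.keys v \<subseteq> (\<Union>i\<in>set (i # is). blk k i) \<and> (\<forall>i\<in>set (i # is). bsum k v i = Poly_Mapping.lookup a i)}"
      define s where "s = rs v (blk k i)"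
      define y where "y = v - s"
      have ls: "Poly_Mapping.lookup s x = (if x \<in> blk k i then Poly_Mapping.lookup v x else 0)" for x
        unfolding s_def by (rule lookup_rs)
      have vsy: "v = s + y" unfolding y_def pm_eq_iff by (simp add: lookup_add lookup_minus_nat ls)
      have ks: "Poly_Mapping.keys s \<subseteq> blk k i" by (auto simp: in_keys_iff ls split: if_splits)
      have ky: "Poly_Mapping.keys y \<subseteq> (\<Union>i\<in>set is. blk k i)"
      proof
        fix x assume x: "x \<in> Poly_Mapping.keys y"
        then have "x \<notin> blk k i" unfolding y_def by (auto simp: in_keys_iff lookup_minus_nat ls)
        moreover have "x \<in> Poly_Mapping.keys v" using x keys_minus_nat[of v s] unfolding y_def by blast
        ultimately show "x \<in> (\<Union>i\<in>set is. blk k i)" using v by auto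
      qed
      have bs: "bsum k s i = bsum k v i"
        unfolding bsum_def by (intro sum.cong refl) (simp add: ls blk_def)
      have "s \<in> sumset (PB k i) (Poly_Mapping.lookup a i)" using ks bs v sumset_PB by auto
      moreover have "y \<in> Yf k a is"
      proof -
        have "\<forall>i'\<in>set is. bsum k y i' = Poly_Mapping.lookup a i'"
        proof
          fix i' assume i': "i' \<in> set is"
          have "bsum k s i' = 0" using bsum_outside[OF ks disj2[OF i']] .
          moreover have "bsum k v i' = bsum k s i' + bsum k y i'" unfolding vsy by (rule bsum_add)
          ultimately show "bsum k y i' = Poly_Mapping.lookup a i'" using v i' by simp
        qed
        then show ?thesis using ky IH by simp
      qed
      ultimately show "v \<in> Yf k a (i # is)" unfolding Yf_Cons using vsy by blast
    qed
  qed
qed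

section \<open>The expansion as a monomial ideal\<close>

definition Ta :: "nat \<Rightarrow> (nat \<Rightarrow> nat) \<Rightarrow> (nat \<Rightarrow>\<^sub>0 nat) \<Rightarrow> (nat \<times> nat \<Rightarrow>\<^sub>0 nat) set" where
  "Ta n k a = {v. Poly_Mapping.keys v \<subseteq> expvars n k \<and> (\<forall>i<n. bsum k v i = Poly_Mapping.lookup a i)}"

lemma expvars_blk: "expvars n k = (\<Union>i\<in>set [0..<n]. blk k i)"
  by (auto simp: expvars_def blk_def)

lemma Yf_Ta: "Yf k a [0..<n] = Ta n k a"
  unfolding Yf_char[OF distinct_upt] Ta_def expvars_blk by auto

lemma finite_Ta: "finite (Ta n k a)"
  using finite_Yf[of k a "[0..<n]"] Yf_Ta by simp

lemma keyed_PB: "i < n \<Longrightarrow> keyed (expvars n k) (PB k i)"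
  by (auto simp: keyed_def PB_def expvars_def)

lemma Pideal_MI: "Pideal n k i = (MI (expvars n k) (PB k i) :: (nat \<times> nat, 'k::comm_ring_1) mpoly set)"
proof -
  have "{var (i, j) | j. j < k i} = (mon ` PB k i :: (nat \<times> nat, 'k) mpoly set)" by (auto simp: PB_def var_def)
  then show ?thesis unfolding Pideal_def MI_def by simp
qed

lemma keyed_Yf: "set is \<subseteq> {..<n} \<Longrightarrow> keyed (expvars n k) (Yf k a is)"
proof (induction "is")
  case Nil then show ?case by (simp add: Yf_Nil keyed_def)
next
  case (Cons i "is")
  then have "i < n" "set is \<subseteq> {..<n}" by auto
  then show ?case unfolding Yf_Cons
    using keyed_plus[OF keyed_sumset[OF keyed_PB] Cons.IH] by simp
qed

lemma fold_MI:
  "set is \<subseteq> {..<n} \<Longrightarrow>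
   foldr (\<lambda>i J. ideal_mult (expvars n k) (ideal_pow (expvars n k) (Pideal n k i) (Poly_Mapping.lookup a i)) J)
     is (ideal_gen (expvars n k) {1}) = (MI (expvars n k) (Yf k a is) :: (nat \<times> nat, 'k::field) mpoly set)"
proof (induction "is")
  case Nil then show ?case by (simp add: ig_one Yf_Nil)
next
  case (Cons i "is")
  then have i: "i < n" and s: "set is \<subseteq> {..<n}" by auto
  have "foldr (\<lambda>i J. ideal_mult (expvars n k) (ideal_pow (expvars n k) (Pideal n k i) (Poly_Mapping.lookup a i)) J)
     (i # is) (ideal_gen (expvars n k) {1})
     = ideal_mult (expvars n k) (ideal_pow (expvars n k) (Pideal n k i) (Poly_Mapping.lookup a i)) (MI (expvars n k) (Yf k a is) :: (nat \<times> nat, 'k) mpoly set)"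
    using Cons.IH[OF s] by simp
  also have "\<dots> = ideal_mult (expvars n k) (MI (expvars n k) (sumset (PB k i) (Poly_Mapping.lookup a i))) (MI (expvars n k) (Yf k a is))"
    unfolding Pideal_MI MI_pow[OF keyed_PB[OF i]] ..
  also have "\<dots> = MI (expvars n k) (Yf k a (i # is))"
    unfolding Yf_Cons by (rule MI_mult[OF keyed_sumset[OF keyed_PB[OF i]] keyed_Yf[OF s]])
  finally show ?case .
qed

lemma MI_Union:
  assumes "\<And>a. a \<in> G \<Longrightarrow> keyed V (A a)"
  shows "ideal_gen V (\<Union>a\<in>G. MI V (A a)) = (MI V (\<Union>a\<in>G. A a) :: ('v,'k::field) mpoly set)"
proof
  have kU: "keyed V (\<Union>a\<in>G. A a)" using assms unfolding keyed_def by blast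
  show "ideal_gen V (\<Union>a\<in>G. MI V (A a)) \<subseteq> (MI V (\<Union>a\<in>G. A a) :: ('v,'k) mpoly set)"
  proof (rule ig_least[OF _ ideal_like_MI[OF kU]], rule subsetI)
    fix p :: "('v,'k) mpoly" assume "p \<in> (\<Union>a\<in>G. MI V (A a))"
    then obtain a where a: "a \<in> G" "p \<in> MI V (A a)" by blast
    have "mon ` A a \<subseteq> (mon ` (\<Union>a\<in>G. A a) :: ('v,'k) mpoly set)" using a(1) by blast
    then have "MI V (A a) \<subseteq> (MI V (\<Union>a\<in>G. A a) :: ('v,'k) mpoly set)" unfolding MI_def by (rule ig_mono)
    then show "p \<in> MI V (\<Union>a\<in>G. A a)" using a(2) by blast
  qed
  show "(MI V (\<Union>a\<in>G. A a) :: ('v,'k) mpoly set) \<subseteq> ideal_gen V (\<Union>a\<in>G. MI V (A a))"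
    unfolding MI_def
  proof (rule ig_mono, rule subsetI)
    fix p :: "('v,'k) mpoly" assume "p \<in> mon ` (\<Union>a\<in>G. A a)"
    then obtain a x where ax: "a \<in> G" "x \<in> A a" "p = mon x" by blast
    have "p \<in> ideal_gen V (mon ` A a)" using ax by (intro ig_gen) blast
    then show "p \<in> (\<Union>a\<in>G. ideal_gen V (mon ` A a))" using ax(1) by blast
  qed
qed

lemma keyed_Ta: "keyed (expvars n k) (Ta n k a)"
  by (auto simp: keyed_def Ta_def)

lemma expansion_MI:
  "expansion n k (I :: (nat,'k::field) mpoly set) = MI (expvars n k) (\<Union>a\<in>min_gens {..<n} I. Ta n k a)"
proof -
  have f: "foldr (\<lambda>i J. ideal_mult (expvars n k) (ideal_pow (expvars n k) (Pideal n k i) (Poly_Mapping.lookup a i)) J)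
     [0..<n] (ideal_gen (expvars n k) {1}) = (MI (expvars n k) (Ta n k a) :: (nat \<times> nat, 'k) mpoly set)" for a
  proof -
    have sub: "set [0..<n] \<subseteq> {..<n}" by auto
    show ?thesis using fold_MI[OF sub, of k a, where 'k='k] Yf_Ta[of k a n] by simp
  qed
  have "expansion n k I = ideal_gen (expvars n k) (\<Union>a\<in>min_gens {..<n} I. (MI (expvars n k) (Ta n k a) :: (nat \<times> nat, 'k) mpoly set))"
    unfolding expansion_def f ..
  also have "\<dots> = MI (expvars n k) (\<Union>a\<in>min_gens {..<n} I. Ta n k a)"
    by (rule MI_Union) (rule keyed_Ta)
  finally show ?thesis .
qed


lemma sum_le_eq:
  fixes f g :: "'a \<Rightarrow> nat"
  assumes "finite S" "\<And>x. x \<in> S \<Longrightarrow> f x \<le> g x" "sum f S = sum g S" "x \<in> S"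
  shows "f x = g x"
proof (rule ccontr)
  assume "f x \<noteq> g x"
  then have "f x < g x" using assms(2)[OF assms(4)] by simp
  then have "sum f S < sum g S" using assms by (intro sum_strict_mono_ex1) auto
  then show False using assms(3) by simp
qed

lemma sum_less_ex:
  fixes f g :: "'a \<Rightarrow> nat"
  assumes "sum f S < sum g S"
  shows "\<exists>x\<in>S. f x < g x"
proof (rule ccontr)
  assume "\<not> (\<exists>x\<in>S. f x < g x)"
  then have "sum g S \<le> sum f S" by (intro sum_mono) (simp add: not_less)
  then show False using assms by simp
qed

lemma bsum_mono: "mdvd u v \<Longrightarrow> bsum k u i \<le> bsum k v i"
  unfolding bsum_def mdvd_def by (intro sum_mono) blast

lemma keys_Ta: "v \<in> Ta n k a \<Longrightarrow> x \<in> Poly_Mapping.keys v \<Longrightarrow> fst x < n \<and> snd x < k (fst x)"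
  unfolding Ta_def expvars_def by auto

lemma Ta_bsum: "v \<in> Ta n k a \<Longrightarrow> i < n \<Longrightarrow> bsum k v i = Poly_Mapping.lookup a i"
  unfolding Ta_def by auto

lemma lookup_keyed_n: "Poly_Mapping.keys a \<subseteq> {..<n} \<Longrightarrow> \<not> i < n \<Longrightarrow> Poly_Mapping.lookup a i = 0"
  by (auto simp: in_keys_iff)

lemma Ta_eq_on_block:
  assumes "mdvd u v" "bsum k u i = bsum k v i" "j < k i"
  shows "Poly_Mapping.lookup u (i, j) = Poly_Mapping.lookup v (i, j)"
  using sum_le_eq[of "{..<k i}" "\<lambda>j. Poly_Mapping.lookup u (i, j)" "\<lambda>j. Poly_Mapping.lookup v (i, j)" j] assms
  unfolding bsum_def mdvd_def by simp

lemma Ta_antichain: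
  assumes "antichain G" "keyed {..<n} G"
  shows "antichain (\<Union>a\<in>G. Ta n k a)"
  unfolding antichain_def
proof (intro ballI impI)
  fix t t' assume t': "t' \<in> (\<Union>a\<in>G. Ta n k a)" and t: "t \<in> (\<Union>a\<in>G. Ta n k a)" and d: "mdvd t' t"
  obtain a' where a': "a' \<in> G" "t' \<in> Ta n k a'" using t' by blast
  obtain a where a: "a \<in> G" "t \<in> Ta n k a" using t by blast
  have "mdvd a' a" unfolding mdvd_def
  proof
    fix i show "Poly_Mapping.lookup a' i \<le> Poly_Mapping.lookup a i"
    proof (cases "i < n")
      case True
      then show ?thesis using bsum_mono[OF d, of k i] Ta_bsum[OF a'(2) True] Ta_bsum[OF a(2) True] by simp
    next
      case False
      have "Poly_Mapping.keys a' \<subseteq> {..<n}" using a'(1) assms(2) unfolding keyed_def by blast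
      then show ?thesis using lookup_keyed_n[of a' n i] False by simp
    qed
  qed
  then have aa: "a' = a" using assms(1) a(1) a'(1) unfolding antichain_def by blast
  show "t' = t" unfolding pm_eq_iff
  proof
    fix x :: "nat \<times> nat"
    obtain i j where x: "x = (i, j)" by (cases x)
    show "Poly_Mapping.lookup t' x = Poly_Mapping.lookup t x"
    proof (cases "i < n \<and> j < k i")
      case True
      have "bsum k t' i = bsum k t i" using Ta_bsum[OF a'(2)] Ta_bsum[OF a(2)] True aa by simp
      then show ?thesis using Ta_eq_on_block[OF d] True x by simp
    next
      case False
      have "x \<notin> Poly_Mapping.keys t" using keys_Ta[OF a(2), of x] False x by auto
      moreover have "x \<notin> Poly_Mapping.keys t'" using keys_Ta[OF a'(2), of x] False x by auto
      ultimately show ?thesis by (simp add: in_keys_iff)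
    qed
  qed
qed

lemma sub_exists:
  fixes y :: "nat \<times> nat \<Rightarrow>\<^sub>0 nat"
  assumes "\<forall>l<n. c l \<le> bsum k y l"
  shows "\<exists>u. mdvd u y \<and> (\<forall>l<n. bsum k u l = c l)"
  using assms
proof (induction "\<Sum>l<n. bsum k y l - c l" arbitrary: y rule: less_induct)
  case less
  show ?case
  proof (cases "\<forall>l<n. bsum k y l = c l")
    case True then show ?thesis using mdvd_refl by blast
  next
    case False
    then obtain l where l: "l < n" "bsum k y l \<noteq> c l" by blast
    then have lt: "c l < bsum k y l" using less.prems by (simp add: order_le_neq_trans)
    then obtain j where j: "j < k l" "Poly_Mapping.lookup y (l, j) \<noteq> 0" using bsum_pos[of k y l] by auto
    define e where "e = Poly_Mapping.single (l, j) (1::nat)"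
    define y' where "y' = y - e"
    have yy: "y = y' + e" unfolding y'_def e_def pm_eq_iff
      using j(2) by (auto simp: lookup_add lookup_minus_nat lookup_single when_def)
    have bs: "bsum k y l' = bsum k y' l' + (if l' = l then 1 else 0)" for l'
      by (subst yy, simp only: bsum_add e_def bsum_single) (use j(1) in auto)
    have prem: "\<forall>l'<n. c l' \<le> bsum k y' l'"
    proof (intro allI impI)
      fix l' assume "l' < n"
      show "c l' \<le> bsum k y' l'"
      proof (cases "l' = l")
        case True then show ?thesis using lt bs[of l] by simp
      next
        case False
        have "c l' \<le> bsum k y l'" using less.prems \<open>l' < n\<close> by blast
        then show ?thesis using False bs[of l'] by simp
      qed
    qed
    have "(\<Sum>l<n. bsum k y' l - c l) < (\<Sum>l<n. bsum k y l - c l)"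
    proof (rule sum_strict_mono_ex1)
      show "finite {..<n}" by simp
      show "\<forall>x\<in>{..<n}. bsum k y' x - c x \<le> bsum k y x - c x"
      proof
        fix x show "bsum k y' x - c x \<le> bsum k y x - c x" using bs[of x] by (simp add: diff_le_mono)
      qed
      have "bsum k y' l - c l < bsum k y l - c l" using bs[of l] lt by simp
      then show "\<exists>x\<in>{..<n}. bsum k y' x - c x < bsum k y x - c x" using l(1) by blast
    qed
    then obtain u where u: "mdvd u y'" "\<forall>l<n. bsum k u l = c l" using less.hyps prem by blast
    have "mdvd y' y" using yy mdvd_add_right[of y' e] by simp
    then show ?thesis using u mdvd_trans by blast
  qed
qed


section \<open>From the expansion back to the ideal\<close>

definition emb :: "(nat \<Rightarrow>\<^sub>0 nat) \<Rightarrow> (nat \<times> nat \<Rightarrow>\<^sub>0 nat)" where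
  "emb a = Abs_poly_mapping (\<lambda>x. if snd x = 0 then Poly_Mapping.lookup a (fst x) else 0)"

lemma lookup_emb: "Poly_Mapping.lookup (emb a) x = (if snd x = 0 then Poly_Mapping.lookup a (fst x) else 0)"
proof -
  have "{x :: nat \<times> nat. (if snd x = 0 then Poly_Mapping.lookup a (fst x) else 0) \<noteq> 0} \<subseteq> (\<lambda>i. (i, 0::nat)) ` Poly_Mapping.keys a"
  proof
    fix x :: "nat \<times> nat" assume "x \<in> {x. (if snd x = 0 then Poly_Mapping.lookup a (fst x) else 0) \<noteq> 0}"
    then have "snd x = 0" "fst x \<in> Poly_Mapping.keys a" by (auto simp: in_keys_iff split: if_splits)
    then show "x \<in> (\<lambda>i. (i, 0::nat)) ` Poly_Mapping.keys a" by (cases x) auto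
  qed
  then have "finite {x :: nat \<times> nat. (if snd x = 0 then Poly_Mapping.lookup a (fst x) else 0) \<noteq> 0}"
    by (rule finite_subset) simp
  then show ?thesis unfolding emb_def by simp
qed

lemma lookup_emb0: "Poly_Mapping.lookup (emb a) (i, 0) = Poly_Mapping.lookup a i"
  by (simp add: lookup_emb)

lemma emb_inj:
  assumes "emb a = emb b" shows "a = b"
proof -
  have "Poly_Mapping.lookup a i = Poly_Mapping.lookup b i" for i
    using lookup_emb0[of a i] lookup_emb0[of b i] assms by simp
  then show ?thesis by (simp add: pm_eq_iff)
qed

lemma emb_minus: "emb (a - b) = emb a - emb b"
  unfolding pm_eq_iff by (simp add: lookup_emb lookup_minus_nat)

lemma emb_single:
  assumes "emb c = Poly_Mapping.single w 1"
  shows "\<exists>i. w = (i, 0) \<and> c = Poly_Mapping.single i 1"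
proof -
  have "Poly_Mapping.lookup (emb c) w = 1" using assms by simp
  then have w0: "snd w = 0" by (simp add: lookup_emb split: if_splits)
  obtain i where wi: "w = (i, 0)" using w0 by (cases w) simp
  have "Poly_Mapping.lookup c i' = Poly_Mapping.lookup (Poly_Mapping.single i (1::nat)) i'" for i'
    using arg_cong[OF assms, of "\<lambda>p. Poly_Mapping.lookup p (i', 0)"] wi
    by (simp add: lookup_emb0 lookup_single when_def)
  then have "c = Poly_Mapping.single i 1" by (simp add: pm_eq_iff)
  then show ?thesis using wi by blast
qed

lemma emb_in_Ta:
  assumes "\<forall>i<n. 1 \<le> k i" "Poly_Mapping.keys a \<subseteq> {..<n}"
  shows "emb a \<in> Ta n k a"
proof -
  have "Poly_Mapping.keys (emb a) \<subseteq> expvars n k"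
  proof
    fix x assume x: "x \<in> Poly_Mapping.keys (emb a)"
    then have "snd x = 0" "fst x \<in> Poly_Mapping.keys a" by (auto simp: in_keys_iff lookup_emb split: if_splits)
    then have "fst x < n" "snd x < k (fst x)" using assms by auto
    then show "x \<in> expvars n k" unfolding expvars_def by (cases x) simp
  qed
  moreover have "bsum k (emb a) i = Poly_Mapping.lookup a i" if "i < n" for i
  proof -
    have "bsum k (emb a) i = (\<Sum>j<k i. if j = 0 then Poly_Mapping.lookup a i else 0)"
      unfolding bsum_def by (intro sum.cong refl) (simp add: lookup_emb)
    also have "\<dots> = Poly_Mapping.lookup a i"
    proof -
      have "0 < k i" using assms(1) that by (simp add: Suc_le_eq)
      then show ?thesis by (simp add: sum.delta')
    qed
    finally show ?thesis .
  qed
  ultimately show ?thesis unfolding Ta_def by blast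
qed

definition col0 :: "(nat \<times> nat \<Rightarrow>\<^sub>0 nat) \<Rightarrow> bool" where
  "col0 t \<longleftrightarrow> Poly_Mapping.keys t \<subseteq> {x. snd x = 0}"

lemma col0_emb: "col0 (emb a)"
  unfolding col0_def by (auto simp: in_keys_iff lookup_emb split: if_splits)

lemma col0_Ta:
  assumes "\<forall>i<n. 1 \<le> k i" "Poly_Mapping.keys a \<subseteq> {..<n}" "t \<in> Ta n k a" "col0 t"
  shows "t = emb a"
  unfolding pm_eq_iff
proof
  fix x :: "nat \<times> nat"
  obtain i j where x: "x = (i, j)" by (cases x)
  have z: "Poly_Mapping.lookup t (i', j') = 0" if "j' \<noteq> 0" for i' j'
    using assms(4) that unfolding col0_def by (auto simp: in_keys_iff)
  show "Poly_Mapping.lookup t x = Poly_Mapping.lookup (emb a) x"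
  proof (cases "j = 0")
    case False then show ?thesis using z x by (simp add: lookup_emb)
  next
    case True
    show ?thesis
    proof (cases "i < n")
      case True
      have "bsum k t i = (\<Sum>j<k i. if j = 0 then Poly_Mapping.lookup t (i, 0) else 0)"
        unfolding bsum_def by (intro sum.cong refl) (simp add: z)
      also have "\<dots> = Poly_Mapping.lookup t (i, 0)"
      proof -
        have "0 < k i" using assms(1) True by (simp add: Suc_le_eq)
        then show ?thesis by (simp add: sum.delta')
      qed
      finally show ?thesis using Ta_bsum[OF assms(3) True] x \<open>j = 0\<close> by (simp add: lookup_emb)
    next
      case False
      have "x \<notin> Poly_Mapping.keys t" using keys_Ta[OF assms(3), of x] False x by auto
      moreover have "Poly_Mapping.lookup a i = 0" using lookup_keyed_n[OF assms(2) False] .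
      ultimately show ?thesis using x \<open>j = 0\<close> by (simp add: in_keys_iff lookup_emb)
    qed
  qed
qed

lemma lqrel_restrict:
  assumes "lqrel P X"
    and "\<And>a a' u w. Q u \<Longrightarrow> Q a \<Longrightarrow> a' - u = Poly_Mapping.single w 1 \<Longrightarrow>
           Poly_Mapping.lookup u w < Poly_Mapping.lookup a w \<Longrightarrow> Q a'"
  shows "lqrel P {x \<in> X. Q x}"
  unfolding lqrel_def
proof (intro ballI impI)
  fix y t assume y: "y \<in> {x \<in> X. Q x}" and t: "t \<in> {x \<in> X. Q x}" and p: "P t y"
  then obtain t' w where t': "t' \<in> X" "P t' y" "t' - y = Poly_Mapping.single w 1"
      "Poly_Mapping.lookup y w < Poly_Mapping.lookup t w"
    using assms(1) unfolding lqrel_def by blast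
  have "Q t'" using assms(2)[of y t t' w] y t t'(3,4) by blast
  then show "\<exists>t'\<in>{x \<in> X. Q x}. P t' y \<and> (\<exists>w. t' - y = Poly_Mapping.single w 1 \<and> Poly_Mapping.lookup y w < Poly_Mapping.lookup t w)"
    using t' by blast
qed

lemma col0_closed:
  assumes "col0 u" "col0 a" "a' - u = Poly_Mapping.single w 1" "Poly_Mapping.lookup u w < Poly_Mapping.lookup a w"
  shows "col0 a'"
proof -
  have "w \<in> Poly_Mapping.keys a" using assms(4) by (simp add: in_keys_iff)
  then have "snd w = 0" using assms(2) unfolding col0_def by blast
  have "Poly_Mapping.keys a' \<subseteq> Poly_Mapping.keys (a' - u) \<union> Poly_Mapping.keys u" by (rule keys_le_minus)
  also have "\<dots> \<subseteq> {x. snd x = 0}" using assms(1,3) \<open>snd w = 0\<close> unfolding col0_def by simp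
  finally show ?thesis unfolding col0_def .
qed

lemma lqrel_emb:
  assumes "lqrel P (emb ` G)"
  shows "lqrel (\<lambda>a b. P (emb a) (emb b)) G"
  unfolding lqrel_def
proof (intro ballI impI)
  fix y t assume y: "y \<in> G" and t: "t \<in> G" and p: "P (emb t) (emb y)"
  then obtain t'' w where t'': "t'' \<in> emb ` G" "P t'' (emb y)" "t'' - emb y = Poly_Mapping.single w 1"
      "Poly_Mapping.lookup (emb y) w < Poly_Mapping.lookup (emb t) w"
    using assms unfolding lqrel_def by blast
  obtain t' where t': "t' \<in> G" "t'' = emb t'" using t''(1) by blast
  have "emb (t' - y) = Poly_Mapping.single w 1" using t''(3) t'(2) by (simp add: emb_minus)
  then obtain i where i: "w = (i, 0)" "t' - y = Poly_Mapping.single i 1" using emb_single by blast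
  have "Poly_Mapping.lookup y i < Poly_Mapping.lookup t i" using t''(4) i(1) by (simp add: lookup_emb0)
  then show "\<exists>t'\<in>G. P (emb t') (emb y) \<and> (\<exists>w. t' - y = Poly_Mapping.single w 1 \<and> Poly_Mapping.lookup y w < Poly_Mapping.lookup t w)"
    using t' t''(2) i(2) by blast
qed

lemma dir_back:
  assumes k1: "\<forall>i<n. 1 \<le> k i" and kG: "keyed {..<n} G"
    and vs: "distinct vs" "set vs = (\<Union>a\<in>G. Ta n k a)" "LQL vs"
  shows "\<exists>us. distinct us \<and> set us = G \<and> LQL us"
proof -
  let ?T = "\<Union>a\<in>G. Ta n k a"
  let ?P = "\<lambda>x y. idx vs x < idx vs y"
  have l1: "lqrel ?P ?T" using LQL_iff_lqrel[OF sorted_idx[OF vs(1)]] vs by simp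
  have l2: "lqrel ?P {t \<in> ?T. col0 t}"
    by (rule lqrel_restrict[OF l1]) (rule col0_closed)
  have kga: "Poly_Mapping.keys a \<subseteq> {..<n}" if "a \<in> G" for a using kG that unfolding keyed_def by blast
  have eq: "{t \<in> ?T. col0 t} = emb ` G"
  proof
    show "{t \<in> ?T. col0 t} \<subseteq> emb ` G"
    proof
      fix t assume "t \<in> {t \<in> ?T. col0 t}"
      then obtain a where a: "a \<in> G" "t \<in> Ta n k a" "col0 t" by blast
      then have "t = emb a" using col0_Ta[OF k1 kga[OF a(1)]] by blast
      then show "t \<in> emb ` G" using a(1) by blast
    qed
    show "emb ` G \<subseteq> {t \<in> ?T. col0 t}"
    proof
      fix t assume "t \<in> emb ` G"
      then obtain a where a: "a \<in> G" "t = emb a" by blast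
      then have "t \<in> Ta n k a" using emb_in_Ta[OF k1 kga[OF a(1)]] by simp
      then show "t \<in> {t \<in> ?T. col0 t}" using a col0_emb by blast
    qed
  qed
  have l3: "lqrel (\<lambda>a b. idx vs (emb a) < idx vs (emb b)) G"
    using lqrel_emb[of ?P G] l2 eq by simp
  have injemb: "inj_on emb G" by (auto simp: inj_on_def dest: emb_inj)
  have sub: "emb ` G \<subseteq> set vs" using eq vs(2) by blast
  have fin: "finite G"
  proof -
    have "finite (emb ` G)" using sub finite_subset by blast
    then show ?thesis using finite_imageD[OF _ injemb] by blast
  qed
  have inj: "inj_on (\<lambda>a. idx vs (emb a)) G"
  proof (rule inj_onI)
    fix a b assume ab: "a \<in> G" "b \<in> G" "idx vs (emb a) = idx vs (emb b)"
    have "emb a \<in> set vs" "emb b \<in> set vs" using ab(1,2) sub by auto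
    then have "emb a = emb b" using inj_idx[OF vs(1)] ab(3) unfolding inj_on_def by blast
    then show "a = b" by (rule emb_inj)
  qed
  show ?thesis by (rule lqrel_to_list[OF fin inj l3])
qed


section \<open>From the ideal to the expansion\<close>

lemma step_A:
  assumes y: "y \<in> Ta n k a" and t: "t \<in> Ta n k b"
    and bb: "b' - a = Poly_Mapping.single i 1" "Poly_Mapping.lookup a i < Poly_Mapping.lookup b i"
    and kb: "Poly_Mapping.keys b \<subseteq> {..<n}"
  shows "\<exists>t'\<in>Ta n k b'. \<exists>w. t' - y = Poly_Mapping.single w 1 \<and> Poly_Mapping.lookup y w < Poly_Mapping.lookup t w"
proof -
  have "i \<in> Poly_Mapping.keys b" using bb(2) by (simp add: in_keys_iff)
  then have i: "i < n" using kb by blast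
  have "bsum k y i < bsum k t i" using Ta_bsum[OF y i] Ta_bsum[OF t i] bb(2) by simp
  then obtain j where j: "j \<in> {..<k i}" "Poly_Mapping.lookup y (i, j) < Poly_Mapping.lookup t (i, j)"
    unfolding bsum_def using sum_less_ex[of "\<lambda>j. Poly_Mapping.lookup y (i, j)" "{..<k i}" "\<lambda>j. Poly_Mapping.lookup t (i, j)"]
    by blast
  have bi: "Poly_Mapping.lookup b' i = Poly_Mapping.lookup a i + 1"
    using arg_cong[OF bb(1), of "\<lambda>p. Poly_Mapping.lookup p i"] by (simp add: lookup_minus_nat)
  have bl: "Poly_Mapping.lookup b' l \<le> Poly_Mapping.lookup a l" if "l \<noteq> i" for l
    using arg_cong[OF bb(1), of "\<lambda>p. Poly_Mapping.lookup p l"] that by (simp add: lookup_minus_nat lookup_single when_def)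
  define c where "c l = (if l = i then bsum k y i else Poly_Mapping.lookup b' l)" for l
  have "\<forall>l<n. c l \<le> bsum k y l"
  proof (intro allI impI)
    fix l assume "l < n"
    show "c l \<le> bsum k y l"
    proof (cases "l = i")
      case True then show ?thesis by (simp add: c_def)
    next
      case False then show ?thesis using bl[of l] Ta_bsum[OF y \<open>l < n\<close>] by (simp add: c_def)
    qed
  qed
  then obtain u where u: "mdvd u y" "\<forall>l<n. bsum k u l = c l" using sub_exists by blast
  define w where "w = (i, j)"
  define t' where "t' = u + Poly_Mapping.single w (1::nat)"
  have wV: "w \<in> expvars n k" using i j(1) unfolding w_def expvars_def by simp
  have ku: "Poly_Mapping.keys u \<subseteq> expvars n k"
    using mdvd_keys[OF u(1)] y unfolding Ta_def by blast
  have "Poly_Mapping.keys t' \<subseteq> expvars n k" unfolding t'_def keys_add_nat using ku wV by simp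
  moreover have "\<forall>l<n. bsum k t' l = Poly_Mapping.lookup b' l"
  proof (intro allI impI)
    fix l assume l: "l < n"
    have "bsum k t' l = bsum k u l + (if i = l \<and> j < k l then 1 else 0)"
      unfolding t'_def w_def bsum_add bsum_single ..
    then show "bsum k t' l = Poly_Mapping.lookup b' l"
      using u(2) l j(1) Ta_bsum[OF y i] bi by (auto simp: c_def)
  qed
  ultimately have t'T: "t' \<in> Ta n k b'" unfolding Ta_def by blast
  have "bsum k u i = bsum k y i" using u(2) i by (simp add: c_def)
  then have uw: "Poly_Mapping.lookup u w = Poly_Mapping.lookup y w"
    unfolding w_def using Ta_eq_on_block[OF u(1)] j(1) by simp
  have "t' - y = Poly_Mapping.single w 1" unfolding pm_eq_iff
  proof
    fix x
    show "Poly_Mapping.lookup (t' - y) x = Poly_Mapping.lookup (Poly_Mapping.single w 1) x"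
    proof (cases "x = w")
      case True then show ?thesis unfolding t'_def by (simp add: lookup_minus_nat lookup_add uw)
    next
      case False
      have "Poly_Mapping.lookup u x \<le> Poly_Mapping.lookup y x" using u(1) unfolding mdvd_def by blast
      then show ?thesis unfolding t'_def using False by (simp add: lookup_minus_nat lookup_add lookup_single when_def)
    qed
  qed
  then show ?thesis using t'T j(2) unfolding w_def by blast
qed

lemma step_B:
  assumes y: "y \<in> Ta n k a" and t: "t \<in> Ta n k a" and lt: "t < y"
  shows "\<exists>t'\<in>Ta n k a. t' < y \<and> (\<exists>w. t' - y = Poly_Mapping.single w 1 \<and> Poly_Mapping.lookup y w < Poly_Mapping.lookup t w)"
proof -
  obtain x where x: "Poly_Mapping.lookup t x < Poly_Mapping.lookup y x"
      "\<And>x'. x' < x \<Longrightarrow> Poly_Mapping.lookup t x' = Poly_Mapping.lookup y x'"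
    using lt unfolding less_poly_mapping.rep_eq less_fun_def by blast
  obtain i j where xij: "x = (i, j)" by (cases x)
  have "x \<in> Poly_Mapping.keys y" using x(1) by (simp add: in_keys_iff)
  then have ij: "i < n" "j < k i" using keys_Ta[OF y] xij by auto
  have eqs: "(\<Sum>j<k i. Poly_Mapping.lookup t (i, j)) = (\<Sum>j<k i. Poly_Mapping.lookup y (i, j))"
    using Ta_bsum[OF y ij(1)] Ta_bsum[OF t ij(1)] unfolding bsum_def by simp
  have "\<exists>j'. j < j' \<and> j' < k i \<and> Poly_Mapping.lookup y (i, j') < Poly_Mapping.lookup t (i, j')"
  proof (rule ccontr)
    assume nex: "\<not> (\<exists>j'. j < j' \<and> j' < k i \<and> Poly_Mapping.lookup y (i, j') < Poly_Mapping.lookup t (i, j'))"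
    have le: "Poly_Mapping.lookup t (i, j') \<le> Poly_Mapping.lookup y (i, j')" if "j < j'" "j' < k i" for j'
    proof -
      have "\<not> Poly_Mapping.lookup y (i, j') < Poly_Mapping.lookup t (i, j')" using nex that by blast
      then show ?thesis by simp
    qed
    have "(\<Sum>j<k i. Poly_Mapping.lookup t (i, j)) < (\<Sum>j<k i. Poly_Mapping.lookup y (i, j))"
    proof (rule sum_strict_mono_ex1)
      show "finite {..<k i}" by simp
      show "\<forall>j''\<in>{..<k i}. Poly_Mapping.lookup t (i, j'') \<le> Poly_Mapping.lookup y (i, j'')"
      proof
        fix j'' assume j'': "j'' \<in> {..<k i}"
        consider "j'' < j" | "j'' = j" | "j < j''" by linarith
        then show "Poly_Mapping.lookup t (i, j'') \<le> Poly_Mapping.lookup y (i, j'')"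
        proof cases
          case 1 then have "(i, j'') < x" using xij by simp
          then show ?thesis using x(2) by simp
        next
          case 2 then show ?thesis using x(1) xij by simp
        next
          case 3 then show ?thesis using le j'' by simp
        qed
      qed
      show "\<exists>j''\<in>{..<k i}. Poly_Mapping.lookup t (i, j'') < Poly_Mapping.lookup y (i, j'')"
        using x(1) xij ij(2) by auto
    qed
    then show False using eqs by simp
  qed
  then obtain j' where j': "j < j'" "j' < k i" "Poly_Mapping.lookup y (i, j') < Poly_Mapping.lookup t (i, j')"
    by blast
  define w where "w = (i, j')"
  have wx: "w \<noteq> x" "x < w" using j'(1) unfolding w_def xij by auto
  define y0 where "y0 = y - Poly_Mapping.single x (1::nat)"
  have yy: "y = y0 + Poly_Mapping.single x 1" unfolding y0_def pm_eq_iff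
    using x(1) by (auto simp: lookup_add lookup_minus_nat lookup_single when_def)
  define t' where "t' = y0 + Poly_Mapping.single w (1::nat)"
  have wV: "w \<in> expvars n k" using ij j'(2) unfolding w_def expvars_def by simp
  have ky: "Poly_Mapping.keys y \<subseteq> expvars n k" using y unfolding Ta_def by blast
  have ky0: "Poly_Mapping.keys y0 \<subseteq> expvars n k" using ky keys_minus_nat[of y "Poly_Mapping.single x 1"]
    unfolding y0_def by blast
  have "Poly_Mapping.keys t' \<subseteq> expvars n k" unfolding t'_def keys_add_nat using ky0 wV by simp
  moreover have "\<forall>l<n. bsum k t' l = Poly_Mapping.lookup a l"
  proof (intro allI impI)
    fix l assume l: "l < n"
    have "bsum k t' l = bsum k y0 l + (if i = l \<and> j' < k l then 1 else 0)"
      unfolding t'_def w_def bsum_add bsum_single ..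
    moreover have "bsum k y l = bsum k y0 l + (if i = l \<and> j < k l then 1 else 0)"
      by (subst yy) (simp only: bsum_add xij bsum_single)
    ultimately show "bsum k t' l = Poly_Mapping.lookup a l"
      using Ta_bsum[OF y l] ij(2) j'(2) by auto
  qed
  ultimately have t'T: "t' \<in> Ta n k a" unfolding Ta_def by blast
  have lk: "Poly_Mapping.lookup t' z = Poly_Mapping.lookup y z - (if z = x then 1 else 0) + (if z = w then 1 else 0)" for z
    unfolding t'_def y0_def by (simp add: lookup_add lookup_minus_nat lookup_single when_def)
  have "t' < y" unfolding less_poly_mapping.rep_eq less_fun_def
  proof (intro exI conjI allI impI)
    show "Poly_Mapping.lookup t' x < Poly_Mapping.lookup y x" using lk[of x] wx x(1) by simp
    fix x' assume "x' < x"
    then have "x' \<noteq> x" "x' \<noteq> w" using wx by auto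
    then show "Poly_Mapping.lookup t' x' = Poly_Mapping.lookup y x'" using lk[of x'] by simp
  qed
  moreover have "t' - y = Poly_Mapping.single w 1" unfolding pm_eq_iff
  proof
    fix z show "Poly_Mapping.lookup (t' - y) z = Poly_Mapping.lookup (Poly_Mapping.single w 1) z"
      using lk[of z] wx by (simp add: lookup_minus_nat lookup_single when_def)
  qed
  ultimately show ?thesis using t'T j'(3) unfolding w_def by blast
qed


definition beta :: "nat \<Rightarrow> (nat \<Rightarrow> nat) \<Rightarrow> (nat \<times> nat \<Rightarrow>\<^sub>0 nat) \<Rightarrow> (nat \<Rightarrow>\<^sub>0 nat)" where
  "beta n k t = Abs_poly_mapping (\<lambda>i. if i < n then bsum k t i else 0)"

lemma lookup_beta: "Poly_Mapping.lookup (beta n k t) i = (if i < n then bsum k t i else 0)"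
proof -
  have "{i. (if i < n then bsum k t i else 0) \<noteq> 0} \<subseteq> {..<n}" by (auto split: if_splits)
  then have "finite {i. (if i < n then bsum k t i else 0) \<noteq> 0}" by (rule finite_subset) simp
  then show ?thesis unfolding beta_def by simp
qed

lemma beta_Ta:
  assumes "Poly_Mapping.keys a \<subseteq> {..<n}" "t \<in> Ta n k a"
  shows "beta n k t = a"
  unfolding pm_eq_iff
proof
  fix i show "Poly_Mapping.lookup (beta n k t) i = Poly_Mapping.lookup a i"
  proof (cases "i < n")
    case True then show ?thesis using Ta_bsum[OF assms(2) True] by (simp add: lookup_beta)
  next
    case False then show ?thesis using lookup_keyed_n[OF assms(1) False] by (simp add: lookup_beta)
  qed
qed

lemma dir_fwd:
  assumes kG: "keyed {..<n} G"
    and us: "distinct us" "set us = G" "LQL us"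
  shows "\<exists>vs. distinct vs \<and> set vs = (\<Union>a\<in>G. Ta n k a) \<and> LQL vs"
proof -
  let ?T = "\<Union>a\<in>G. Ta n k a"
  define key where "key t = (idx us (beta n k t), t)" for t
  have lG: "lqrel (\<lambda>a b. idx us a < idx us b) G" using LQL_iff_lqrel[OF sorted_idx[OF us(1)]] us by simp
  have kga: "Poly_Mapping.keys a \<subseteq> {..<n}" if "a \<in> G" for a using kG that unfolding keyed_def by blast
  have fin: "finite ?T" using us(2) finite_Ta by auto
  have inj: "inj_on key ?T" by (rule inj_onI) (simp add: key_def)
  have "lqrel (\<lambda>x y. key x < key y) ?T" unfolding lqrel_def
  proof (intro ballI impI)
    fix y t assume yT: "y \<in> ?T" and tT: "t \<in> ?T" and kt: "key t < key y"
    obtain a where a: "a \<in> G" "y \<in> Ta n k a" using yT by blast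
    obtain b where b: "b \<in> G" "t \<in> Ta n k b" using tT by blast
    have by': "beta n k y = a" by (rule beta_Ta[OF kga[OF a(1)] a(2)])
    have bt: "beta n k t = b" by (rule beta_Ta[OF kga[OF b(1)] b(2)])
    have cases: "idx us b < idx us a \<or> (idx us b = idx us a \<and> t < y)"
      using kt unfolding key_def by' bt by (auto simp: le_less)
    show "\<exists>t'\<in>?T. key t' < key y \<and> (\<exists>w. t' - y = Poly_Mapping.single w 1 \<and> Poly_Mapping.lookup y w < Poly_Mapping.lookup t w)"
    proof (cases "idx us b < idx us a")
      case True
      then obtain b' w where b': "b' \<in> G" "idx us b' < idx us a" "b' - a = Poly_Mapping.single w 1"
          "Poly_Mapping.lookup a w < Poly_Mapping.lookup b w"
        using lG a(1) b(1) unfolding lqrel_def by blast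
      obtain t' w' where t': "t' \<in> Ta n k b'" "t' - y = Poly_Mapping.single w' 1"
          "Poly_Mapping.lookup y w' < Poly_Mapping.lookup t w'"
        using step_A[OF a(2) b(2) b'(3,4) kga[OF b(1)]] by blast
      have "beta n k t' = b'" by (rule beta_Ta[OF kga[OF b'(1)] t'(1)])
      then have "key t' < key y" using b'(2) unfolding key_def by' by simp
      moreover have "t' \<in> ?T" using t'(1) b'(1) by blast
      ultimately show ?thesis using t'(2,3) by blast
    next
      case False
      then have e: "idx us b = idx us a" "t < y" using cases by auto
      have "b = a" using inj_idx[OF us(1)] e(1) a(1) b(1) us(2) unfolding inj_on_def by blast
      then obtain t' w where t': "t' \<in> Ta n k a" "t' < y" "t' - y = Poly_Mapping.single w 1"
          "Poly_Mapping.lookup y w < Poly_Mapping.lookup t w"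
        using step_B[OF a(2) _ e(2)] b(2) by blast
      have "beta n k t' = a" by (rule beta_Ta[OF kga[OF a(1)] t'(1)])
      then have "key t' < key y" using t'(2) unfolding key_def by' by simp
      moreover have "t' \<in> ?T" using t'(1) a(1) by blast
      ultimately show ?thesis using t'(3,4) by blast
    qed
  qed
  then show ?thesis by (rule lqrel_to_list[OF fin inj])
qed

theorem theorem1p7:
  fixes n :: nat and k :: "nat \<Rightarrow> nat" and I :: "(nat, 'k::field) mpoly set"
  assumes "\<forall>i<n. 1 \<le> k i"
    and "monomial_ideal {..<n} I"
  shows "has_lin_quot {..<n} I \<longleftrightarrow> has_lin_quot (expvars n k) (expansion n k I)"
proof -
  let ?G = "min_gens {..<n} I"
  let ?T = "\<Union>a\<in>?G. Ta n k a"
  note st = monomial_ideal_struct[OF assms(2)]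
  have HI: "has_lin_quot {..<n} I \<longleftrightarrow> (\<exists>us. distinct us \<and> set us = ?G \<and> LQL us)"
    by (rule has_lin_quot_iff[OF st(3) st(1) st(2)])
  have kT: "keyed (expvars n k) ?T" using keyed_Ta unfolding keyed_def by blast
  have aT: "antichain ?T" by (rule Ta_antichain[OF st(2) st(1)])
  have HE: "has_lin_quot (expvars n k) (expansion n k I) \<longleftrightarrow> (\<exists>vs. distinct vs \<and> set vs = ?T \<and> LQL vs)"
    by (rule has_lin_quot_iff[OF expansion_MI kT aT])
  show ?thesis
  proof
    assume "has_lin_quot {..<n} I"
    then obtain us where "distinct us" "set us = ?G" "LQL us" using HI by blast
    then have "\<exists>vs. distinct vs \<and> set vs = ?T \<and> LQL vs" by (rule dir_fwd[OF st(1)])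
    then show "has_lin_quot (expvars n k) (expansion n k I)" using HE by blast
  next
    assume "has_lin_quot (expvars n k) (expansion n k I)"
    then obtain vs where "distinct vs" "set vs = ?T" "LQL vs" using HE by blast
    then have "\<exists>us. distinct us \<and> set us = ?G \<and> LQL us" by (rule dir_back[OF assms(1) st(1)])
    then show "has_lin_quot {..<n} I" using HI by blast
  qed
qed


end
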